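(* Let $H(z)$ be a function analytic at $0$ and let $A(z)=\sum_{n>0}a_nz^n$ be a formal power series whose coefficients satisfy \[ a_n \approx n^{\alpha n}\beta^n n^\gamma\,\tilde A(n^{-1}) \] for some $\alpha\in\mathbb{Z}_{>0}$, $\beta\in\mathbb{R}_{>0}$, $\gamma\in\mathbb{R}$ and nonzero formal power series $\tilde A(z)$. Define \[ \tilde A_j(z) = e^{-\alpha j}\beta^{-j} z^{\alpha j}(1-jz)^{\gamma-\alpha j}\, e^{\alpha z^{-1}(\log(1-jz)+jz)}\,\tilde A\!\left(\frac{z}{1-jz}\right), \qquad \tilde A_H(z) = \sum_{j\geq 0}\tilde A_j(z)\,[x^j]H'(A(x)). \] Then \[ [z^n]H(A(z)) \approx n^{\alpha n}\beta^n n^\gamma\,\tilde A_H(n^{-1}). \]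
   Context: For a formal power series $\tilde F(z)$, $f_n \approx b_n\tilde F(n^{-1})$ means that for every fixed $r\geq 0$, $f_n = b_n\big(\sum_{\ell=0}^{r-1}[z^\ell]\tilde F(z)\,n^{-\ell} + O(n^{-r})\big)$ as $n\to\infty$. $[x^j]F$ denotes the coefficient of $x^j$ in the formal power series $F$; $H(A(x))$ and $H'(A(x))$ are formal compositions (well defined since $A(0)=0$). The sum defining $\tilde A_H$ is a well-defined formal power series since $\tilde A_j(z)$ has valuation at least $\alpha j$. *)

theory Defs
  imports "HOL-Complex_Analysis.Complex_Analysis"
begin

definition asymp_fps :: "(nat \<Rightarrow> complex) \<Rightarrow> (nat \<Rightarrow> real) \<Rightarrow> complex fps \<Rightarrow> bool" where
  "asymp_fps f b F \<longleftrightarrow>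
     (\<forall>r::nat. (\<lambda>n. norm (f n - of_real (b n) *
                    (\<Sum>l<r. fps_nth F l * (1 / of_nat n) ^ l)))
               \<in> O(\<lambda>n. b n * (1 / real n) ^ r))"

definition scale :: "nat \<Rightarrow> real \<Rightarrow> real \<Rightarrow> nat \<Rightarrow> real" where
  "scale \<alpha> \<beta> \<gamma> n = real n ^ (\<alpha> * n) * \<beta> ^ n * real n powr \<gamma>"

definition At_j :: "nat \<Rightarrow> real \<Rightarrow> real \<Rightarrow> complex fps \<Rightarrow> nat \<Rightarrow> complex fps" where
  "At_j \<alpha> \<beta> \<gamma> At j =
     fps_const (of_real (exp (- real (\<alpha> * j)) * inverse \<beta> ^ j))
     * fps_X ^ (\<alpha> * j)
     * (fps_binomial (of_real (\<gamma> - real (\<alpha> * j))) oo (fps_const (- of_nat j) * fps_X))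
     * (fps_exp 1 oo (fps_const (of_nat \<alpha>) *
          fps_shift 1 ((fps_ln 1 oo (fps_const (- of_nat j) * fps_X)) + fps_const (of_nat j) * fps_X)))
     * (At oo (fps_X * inverse (1 - fps_const (of_nat j) * fps_X)))"

text \<open>Atilde_H(z) = sum_{j>=0} Atilde_j(z) [x^j] H'(A(x)); the coefficient of z^n only
  receives contributions from j <= n since Atilde_j has valuation >= alpha j >= j.\<close>
definition At_H :: "nat \<Rightarrow> real \<Rightarrow> real \<Rightarrow> complex fps \<Rightarrow> complex fps \<Rightarrow> complex fps \<Rightarrow> complex fps" where
  "At_H \<alpha> \<beta> \<gamma> At HF A =
     Abs_fps (\<lambda>n. \<Sum>j\<le>n. fps_nth (At_j \<alpha> \<beta> \<gamma> At j) n * fps_nth (fps_deriv HF oo A) j)"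

end

theory Submission
  imports Defs
begin

lemma geosum_bound:
  fixes u :: "nat \<Rightarrow> real"
  assumes pos: "\<And>y. u y > 0" and gr: "\<And>y. y \<ge> m0 \<Longrightarrow> 2 * u y \<le> u (Suc y)"
  shows "\<exists>C>0. \<forall>Y. (\<Sum>y\<le>Y. u y) \<le> C * u Y"
proof -
  define C where "C = 2 + (\<Sum>Y\<le>m0. (\<Sum>y\<le>Y. u y) / u Y)"
  have nn: "\<And>Y. 0 \<le> (\<Sum>y\<le>Y. u y) / u Y" using pos by (intro divide_nonneg_pos sum_nonneg) (auto intro: less_imp_le)
  have C2: "C \<ge> 2" unfolding C_def using nn by (intro add_increasing2 sum_nonneg) auto
  have "(\<Sum>y\<le>Y. u y) \<le> C * u Y" for Y
  proof (induction Y)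
    case 0
    have "(\<Sum>y\<le>0. u y) / u 0 \<le> (\<Sum>Y\<le>m0. (\<Sum>y\<le>Y. u y) / u Y)"
      using nn by (intro member_le_sum) auto
    hence "(\<Sum>y\<le>0. u y) / u 0 \<le> C" unfolding C_def by linarith
    thus ?case using pos[of 0] by (simp add: divide_le_eq)
  next
    case (Suc Y)
    show ?case
    proof (cases "Suc Y \<le> m0")
      case True
      have "(\<Sum>y\<le>Suc Y. u y) / u (Suc Y) \<le> (\<Sum>Y\<le>m0. (\<Sum>y\<le>Y. u y) / u Y)"
        using nn True by (intro member_le_sum) auto
      hence "(\<Sum>y\<le>Suc Y. u y) / u (Suc Y) \<le> C" unfolding C_def by linarith
      thus ?thesis using pos[of "Suc Y"] by (simp add: divide_le_eq)
    next
      case False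
      hence "2 * u Y \<le> u (Suc Y)" using gr by auto
      hence "C * u Y \<le> (C/2) * u (Suc Y)" using C2 by (simp add: field_simps)
      hence "(\<Sum>y\<le>Suc Y. u y) \<le> (C/2) * u (Suc Y) + u (Suc Y)" using Suc.IH by simp
      also have "\<dots> \<le> C * u (Suc Y)" using C2 pos[of "Suc Y"] by (simp add: field_simps)
      finally show ?thesis .
    qed
  qed
  thus ?thesis using C2 by (intro exI[of _ C]) auto
qed

definition sg :: "real \<Rightarrow> real \<Rightarrow> nat \<Rightarrow> nat \<Rightarrow> nat \<Rightarrow> real" where
  "sg K l a p i = K * l ^ i * (fact (i + p)) ^ a"

lemma sg_pos: "K > 0 \<Longrightarrow> l > 0 \<Longrightarrow> sg K l a p i > 0"
  unfolding sg_def by simp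

lemma sg_Suc: "sg K l a p (Suc i) = sg K l a p i * l * (real (Suc i + p)) ^ a"
  unfolding sg_def by (simp add: power_mult_distrib)

lemma sg_u_growth:
  assumes K: "K > 0" and l: "l > 0" and c: "c > 0" and a: "a \<ge> 1"
  shows "\<exists>C>0. \<forall>Y. (\<Sum>y\<le>Y. sg K l a p y / c ^ y) \<le> C * (sg K l a p Y / c ^ Y)"
proof (rule geosum_bound)
  show "0 < sg K l a p y / c ^ y" for y using sg_pos[OF K l] c by simp
next
  fix y assume y: "y \<ge> nat \<lceil>2 * c / l\<rceil>"
  have "2 * c / l \<le> real y" using y by linarith
  hence "2 * c \<le> l * real (Suc y)" using l by (simp add: field_simps)
  also have "real (Suc y) \<le> real (Suc y + p) ^ a"
  proof -
    have "real (Suc y) \<le> real (Suc y + p)" by simp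
    also have "\<dots> \<le> real (Suc y + p) ^ a" using a by (intro self_le_power) auto
    finally show ?thesis .
  qed
  hence "l * real (Suc y) \<le> l * real (Suc y + p) ^ a" using l by simp
  finally have *: "2 * c \<le> l * real (Suc y + p) ^ a" .
  have "2 * (sg K l a p y / c ^ y) = (sg K l a p y / c ^ Suc y) * (2 * c)"
    using c by (simp add: field_simps)
  also have "\<dots> \<le> (sg K l a p y / c ^ Suc y) * (l * real (Suc y + p) ^ a)"
    using * sg_pos[OF K l, of a p y] c by (intro mult_left_mono) (auto intro!: divide_nonneg_pos less_imp_le)
  also have "\<dots> = sg K l a p (Suc y) / c ^ Suc y" by (simp add: sg_Suc)
  finally show "2 * (sg K l a p y / c ^ y) \<le> sg K l a p (Suc y) / c ^ Suc y" .
qed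

lemma sg_usum:
  assumes K: "K > 0" and l: "l > 0" and c: "c > 0" and a: "a \<ge> 1"
  shows "\<exists>C>0. \<forall>n (S::nat set) e. finite S \<longrightarrow> inj_on e S \<longrightarrow> (\<forall>x\<in>S. e x \<le> n) \<longrightarrow>
            (\<Sum>x\<in>S. sg K l a p (e x) / c ^ (e x)) \<le> C * (sg K l a p n / c ^ n)"
proof -
  obtain C where C: "C > 0" "\<And>Y. (\<Sum>y\<le>Y. sg K l a p y / c ^ y) \<le> C * (sg K l a p Y / c ^ Y)"
    using sg_u_growth[OF assms] by blast
  have "(\<Sum>x\<in>S. sg K l a p (e x) / c ^ (e x)) \<le> C * (sg K l a p n / c ^ n)"
    if "finite S" "inj_on e S" "\<forall>x\<in>S. e x \<le> n" for n S e
  proof -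
    have "(\<Sum>x\<in>S. sg K l a p (e x) / c ^ (e x)) = (\<Sum>y\<in>e ` S. sg K l a p y / c ^ y)"
      using that by (simp add: sum.reindex)
    also have "\<dots> \<le> (\<Sum>y\<le>n. sg K l a p y / c ^ y)"
      using that sg_pos[OF K l] c by (intro sum_mono2) (auto intro: less_imp_le)
    also have "\<dots> \<le> C * (sg K l a p n / c ^ n)" by (rule C)
    finally show ?thesis .
  qed
  thus ?thesis using C by blast
qed

lemma fact_shift_le:
  "a + d \<le> b - d \<Longrightarrow> d \<le> b \<Longrightarrow> fact (a+d+p) * fact (b-d+p) \<le> (fact (a+p) * fact (b+p) :: nat)"
proof (induction d)
  case 0 thus ?case by simp
next
  case (Suc d)
  define b' where "b' = b - Suc d"
  have bd: "b - d = Suc b'" using Suc.prems unfolding b'_def by auto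
  have IH: "fact (a+d+p) * fact (Suc b' + p) \<le> (fact (a+p) * fact (b+p) :: nat)"
    using Suc bd by auto
  have le: "a + d + p + 1 \<le> b' + p + 1" using Suc.prems unfolding b'_def by auto
  have "fact (a + Suc d + p) * fact (b - Suc d + p) = (a+d+p+1) * (fact (a+d+p) * fact (b'+p) :: nat)"
    unfolding b'_def by (simp add: algebra_simps)
  also have "\<dots> \<le> (b'+p+1) * (fact (a+d+p) * fact (b'+p))"
    using le by (intro mult_right_mono) auto
  also have "\<dots> = fact (a+d+p) * fact (Suc b' + p)" by (simp add: algebra_simps)
  also have "\<dots> \<le> fact (a+p) * fact (b+p)" by (rule IH)
  finally show ?case .
qed

lemma fact_pair_le:
  assumes "R \<le> i" "i \<le> n - R" "R \<le> n"
  shows "fact (i+p) * fact (n-i+p) \<le> (fact (R+p) * fact (n-R+p) :: nat)"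
proof (cases "i \<le> n - i")
  case True
  have "fact (R + (i-R) + p) * fact ((n-R) - (i-R) + p) \<le> (fact (R+p) * fact (n-R+p) :: nat)"
    using assms True by (intro fact_shift_le) auto
  moreover have "R + (i-R) = i" "(n-R) - (i-R) = n - i" using assms by auto
  ultimately show ?thesis by simp
next
  case False
  have "fact (R + (n-i-R) + p) * fact ((n-R) - (n-i-R) + p) \<le> (fact (R+p) * fact (n-R+p) :: nat)"
    using assms False by (intro fact_shift_le) auto
  moreover have "R + (n-i-R) = n - i" "(n-R) - (n-i-R) = i" using assms False by auto
  ultimately show ?thesis by (simp add: mult.commute)
qed

lemma fact_pair_le_inner:
  assumes "R + 1 \<le> i" "i \<le> n - R - 1" "R + 1 \<le> n"
  shows "fact (i+p) * fact (n-i+p) \<le> (fact (R+1+p) * fact (n-R-1+p) :: nat)"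
proof -
  have "fact (i+p) * fact (n-i+p) \<le> (fact ((R+1)+p) * fact (n-(R+1)+p) :: nat)"
    using assms by (intro fact_pair_le) auto
  thus ?thesis by (simp add: diff_diff_left)
qed

lemma sg_prod_eq:
  assumes "i \<le> n"
  shows "sg K l a p i * sg K l a p (n-i) = K^2 * l^n * (fact (i+p) * fact (n-i+p)) ^ a"
proof -
  have "l ^ i * l ^ (n - i) = l ^ n" using assms by (simp add: power_add[symmetric])
  have "sg K l a p i * sg K l a p (n-i) = (K*K) * (l ^ i * l ^ (n - i)) * (fact (i+p) ^ a * fact (n-i+p) ^ a)"
    unfolding sg_def by (simp only: mult_ac)
  thus ?thesis using \<open>l ^ i * l ^ (n - i) = l ^ n\<close> by (simp add: power_mult_distrib power2_eq_square)
qed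

lemma sg_conv:
  assumes K: "K > 0" and l: "l > 0" and a: "a \<ge> 1" and R: "R \<ge> 1" and n: "2 * R \<le> n"
  shows "(\<Sum>i\<in>{R..n-R}. sg K l a p i * sg K l a p (n-i))
           \<le> (2 + 4 * real (R+1+p)) * (sg K l a p R * sg K l a p (n-R))"
proof -
  define B where "B = sg K l a p R * sg K l a p (n-R)"
  define \<rho> where "\<rho> = real (R+1+p) / real (n-R+p)"
  define T where "T = {R, n-R}"
  define FR where "FR = (fact (R+p) * fact (n-R+p) :: real)"
  have B: "B = K^2 * l^n * FR ^ a" unfolding B_def FR_def using n by (subst sg_prod_eq) auto
  have FRpos: "FR > 0" unfolding FR_def by simp
  have \<rho>0: "\<rho> \<ge> 0" unfolding \<rho>_def by simp
  have endp: "sg K l a p i * sg K l a p (n-i) \<le> B" if i: "i \<in> {R..n-R}" for i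
  proof -
    have "fact (i+p) * fact (n-i+p) \<le> (fact (R+p) * fact (n-R+p) :: nat)"
      using i n by (intro fact_pair_le) auto
    hence "real (fact (i+p) * fact (n-i+p)) \<le> real (fact (R+p) * fact (n-R+p))"
      by (rule of_nat_mono)
    hence "(fact (i+p) * fact (n-i+p) :: real) \<le> FR" unfolding FR_def
      by (simp only: of_nat_mult of_nat_fact)
    hence "(fact (i+p) * fact (n-i+p) :: real) ^ a \<le> FR ^ a"
      by (intro power_mono) auto
    thus ?thesis using i n B K l by (subst sg_prod_eq) auto
  qed
  have inner: "sg K l a p i * sg K l a p (n-i) \<le> B * \<rho>" if i: "i \<in> {R..n-R}" "i \<notin> T" for i
  proof -
    have i2: "R + 1 \<le> i" "i \<le> n - R - 1" using i unfolding T_def by auto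
    hence nR: "R + 1 \<le> n - R" by linarith
    have "fact (i+p) * fact (n-i+p) \<le> (fact (R+1+p) * fact (n-R-1+p) :: nat)"
      using i2 n by (intro fact_pair_le_inner) auto
    hence "real (fact (i+p) * fact (n-i+p)) \<le> real (fact (R+1+p) * fact (n-R-1+p))"
      by (rule of_nat_mono)
    hence le1: "(fact (i+p) * fact (n-i+p) :: real) \<le> fact (R+1+p) * fact (n-R-1+p)"
      by (simp only: of_nat_mult of_nat_fact)
    have e1: "(fact (R+1+p) :: real) = real (R+1+p) * fact (R+p)"
      by (simp add: fact_Suc)
    have e2: "(fact (n-R+p) :: real) = real (n-R+p) * fact (n-R-1+p)"
    proof -
      have "n-R+p = Suc (n-R-1+p)" using nR by simp
      hence "(fact (n-R+p) :: real) = fact (Suc (n-R-1+p))" by simp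
      also have "\<dots> = real (Suc (n-R-1+p)) * fact (n-R-1+p)" by (rule fact_Suc)
      also have "real (Suc (n-R-1+p)) = real (n-R+p)" using \<open>n-R+p = Suc (n-R-1+p)\<close> by simp
      finally show ?thesis .
    qed
    have pos: "real (n-R+p) > 0" using nR by simp
    have "(fact (R+1+p) * fact (n-R-1+p) :: real) = FR * \<rho>"
      unfolding FR_def \<rho>_def e1 e2 using pos by (simp add: field_simps)
    with le1 have "(fact (i+p) * fact (n-i+p) :: real) \<le> FR * \<rho>" by simp
    hence "(fact (i+p) * fact (n-i+p) :: real) ^ a \<le> (FR * \<rho>) ^ a"
      by (intro power_mono) auto
    also have "\<dots> = FR ^ a * \<rho> ^ a" by (simp add: power_mult_distrib)
    also have "\<rho> ^ a \<le> \<rho>"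
    proof -
      have "\<rho> \<le> 1" unfolding \<rho>_def using nR pos by (simp add: divide_le_eq)
      thus ?thesis using \<rho>0 a power_decreasing[of 1 a \<rho>] by simp
    qed
    hence "FR ^ a * \<rho> ^ a \<le> FR ^ a * \<rho>" using FRpos by (intro mult_left_mono) auto
    finally have "(fact (i+p) * fact (n-i+p) :: real) ^ a \<le> FR ^ a * \<rho>" .
    hence "K^2 * l^n * (fact (i+p) * fact (n-i+p) :: real) ^ a \<le> K^2 * l^n * (FR ^ a * \<rho>)"
      using K l by (intro mult_left_mono) auto
    thus ?thesis using i n B by (subst sg_prod_eq) (auto simp: algebra_simps)
  qed
  define S where "S = {R..n-R}"
  have "(\<Sum>i\<in>S. sg K l a p i * sg K l a p (n-i))
        = (\<Sum>i\<in>S \<inter> T. sg K l a p i * sg K l a p (n-i)) + (\<Sum>i\<in>S - T. sg K l a p i * sg K l a p (n-i))"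
    by (simp add: S_def sum.Int_Diff)
  also have "\<dots> \<le> (\<Sum>i\<in>S \<inter> T. B) + (\<Sum>i\<in>S - T. B * \<rho>)"
    using endp inner unfolding S_def by (intro add_mono sum_mono) auto
  also have "\<dots> = real (card (S \<inter> T)) * B + real (card (S - T)) * (B * \<rho>)" by simp
  also have "\<dots> \<le> 2 * B + real (n+1) * (B * \<rho>)"
  proof (intro add_mono mult_right_mono)
    have "card (S \<inter> T) \<le> card T" unfolding T_def by (intro card_mono) auto
    also have "card T \<le> 2" unfolding T_def by (simp add: card_insert_le_m1)
    finally show "real (card (S \<inter> T)) \<le> 2" by simp
    have "card (S - T) \<le> card S" unfolding S_def by (intro card_mono) auto
    also have "card S \<le> n + 1" unfolding S_def by simp
    finally show "real (card (S - T)) \<le> real (n+1)" by simp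
  qed (use B FRpos K l \<rho>0 in auto)
  also have "real (n+1) * \<rho> \<le> 4 * real (R+1+p)"
  proof -
    have pos: "real (n-R+p) > 0" using n R by simp
    have "n+1 \<le> 4 * (n-R+p)" using n R by arith
    hence "real (n+1) \<le> real (4 * (n-R+p))" by (rule of_nat_mono)
    hence "real (n+1) \<le> 4 * real (n-R+p)" by simp
    hence "real (n+1) * real (R+1+p) \<le> (4 * real (n-R+p)) * real (R+1+p)"
      by (rule mult_right_mono) auto
    thus ?thesis unfolding \<rho>_def using pos by (simp add: field_simps)
  qed
  hence "2 * B + real (n+1) * (B * \<rho>) \<le> 2 * B + (4 * real (R+1+p)) * B"
  proof -
    assume h: "real (n+1) * \<rho> \<le> 4 * real (R+1+p)"
    have "B \<ge> 0" using B FRpos K l by simp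
    hence "(real (n+1) * \<rho>) * B \<le> (4 * real (R+1+p)) * B" using h by (rule mult_right_mono[rotated])
    thus ?thesis by (simp add: algebra_simps)
  qed
  finally show ?thesis unfolding B_def S_def by (simp add: algebra_simps)
qed

lemma Q_power_bound:
  fixes Q :: "complex fps"
  assumes K: "K > 0" and l: "l > 0" and a: "a \<ge> 1" and R: "R \<ge> 1"
    and Qb: "\<And>i. norm (fps_nth Q i) \<le> sg K l a p i"
    and Q0: "\<And>i. i < R \<Longrightarrow> fps_nth Q i = 0"
  defines "D \<equiv> (2 + 4 * real (R+1+p)) * sg K l a p R"
  shows "norm (fps_nth (Q ^ Suc k) x) \<le>
           (if Suc k * R \<le> x then D ^ k * sg K l a p (x - k * R) else 0)"
proof (induction k arbitrary: x)
  case 0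
  show ?case
  proof (cases "R \<le> x")
    case True thus ?thesis using Qb[of x] by simp
  next
    case False thus ?thesis using Q0[of x] by simp
  qed
next
  case (Suc k)
  define V where "V = (\<lambda>y. if Suc k * R \<le> y then D ^ k * sg K l a p (y - k * R) else 0)"
  have sgp: "\<And>i. sg K l a p i > 0" using sg_pos[OF K l] .
  define m where "m = k * R"
  have SR: "Suc k * R = R + m" "Suc (Suc k) * R = R + R + m" unfolding m_def by (simp, simp)
  have D0: "D > 0" unfolding D_def using sgp by (intro mult_pos_pos) auto
  have "fps_nth (Q ^ Suc (Suc k)) x = (\<Sum>i=0..x. fps_nth Q i * fps_nth (Q ^ Suc k) (x - i))"
    by (simp add: fps_mult_nth)
  hence "norm (fps_nth (Q ^ Suc (Suc k)) x) \<le> (\<Sum>i=0..x. norm (fps_nth Q i) * norm (fps_nth (Q ^ Suc k) (x - i)))"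
    by (simp add: norm_mult[symmetric] norm_sum)
  also have "\<dots> \<le> (\<Sum>i=0..x. if R \<le> i \<and> Suc k * R \<le> x - i then sg K l a p i * (D ^ k * sg K l a p (x - i - k * R)) else 0)"
  proof (intro sum_mono)
    fix i assume "i \<in> {0..x}"
    show "norm (fps_nth Q i) * norm (fps_nth (Q ^ Suc k) (x - i)) \<le>
          (if R \<le> i \<and> Suc k * R \<le> x - i then sg K l a p i * (D ^ k * sg K l a p (x - i - k * R)) else 0)"
    proof (cases "R \<le> i \<and> Suc k * R \<le> x - i")
      case True
      have "norm (fps_nth Q i) * norm (fps_nth (Q ^ Suc k) (x - i)) \<le> sg K l a p i * (D ^ k * sg K l a p (x - i - k * R))"
        using Qb[of i] Suc.IH[of "x - i"] True using sgp[of i] by (intro mult_mono) auto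
      thus ?thesis using True by simp
    next
      case False
      hence "norm (fps_nth Q i) = 0 \<or> norm (fps_nth (Q ^ Suc k) (x - i)) = 0"
        using Q0[of i] Suc.IH[of "x - i"] by (auto split: if_splits)
      thus ?thesis using False by auto
    qed
  qed
  also have "\<dots> \<le> (if Suc (Suc k) * R \<le> x then D ^ Suc k * sg K l a p (x - Suc k * R) else 0)"
  proof (cases "Suc (Suc k) * R \<le> x")
    case False
    have nc: "\<And>i. \<not> (R \<le> i \<and> Suc k * R \<le> x - i)" using False unfolding SR by linarith
    hence "(\<Sum>i=0..x. if R \<le> i \<and> Suc k * R \<le> x - i then sg K l a p i * (D ^ k * sg K l a p (x - i - k * R)) else 0) = 0" by (intro sum.neutral ballI if_not_P) (rule nc)
    thus ?thesis using False by simp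
  next
    case True
    define x' where "x' = x - k * R"
    have xm: "R + R + m \<le> x" using True unfolding SR .
    have x'2: "2 * R \<le> x'" using xm unfolding x'_def m_def[symmetric] by linarith
    have "(\<Sum>i=0..x. if R \<le> i \<and> Suc k * R \<le> x - i then sg K l a p i * (D ^ k * sg K l a p (x - i - k * R)) else 0)
        = (\<Sum>i\<in>{R..x'-R}. sg K l a p i * (D ^ k * sg K l a p (x' - i)))"
    proof -
      have "(\<Sum>i=0..x. if R \<le> i \<and> Suc k * R \<le> x - i then sg K l a p i * (D ^ k * sg K l a p (x - i - k * R)) else 0)
          = (\<Sum>i\<in>{i\<in>{0..x}. R \<le> i \<and> Suc k * R \<le> x - i}. sg K l a p i * (D ^ k * sg K l a p (x - i - k * R)))"
        by (rule sum.inter_filter[symmetric]) simp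
      also have "{i\<in>{0..x}. R \<le> i \<and> Suc k * R \<le> x - i} = {R..x'-R}"
        using xm unfolding x'_def SR m_def[symmetric] by auto
      also have "(\<Sum>i\<in>{R..x'-R}. sg K l a p i * (D ^ k * sg K l a p (x - i - k * R)))
                 = (\<Sum>i\<in>{R..x'-R}. sg K l a p i * (D ^ k * sg K l a p (x' - i)))"
        by (intro sum.cong refl) (simp only: x'_def m_def[symmetric] diff_commute[of x _ m])
      finally show ?thesis .
    qed
    also have "\<dots> = D ^ k * (\<Sum>i\<in>{R..x'-R}. sg K l a p i * sg K l a p (x' - i))"
      by (simp add: sum_distrib_left algebra_simps)
    also have "\<dots> \<le> D ^ k * ((2 + 4 * real (R+1+p)) * (sg K l a p R * sg K l a p (x'-R)))"
      using D0 by (intro mult_left_mono sg_conv K l a R x'2) auto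
    also have "\<dots> = D ^ Suc k * sg K l a p (x - Suc k * R)"
    proof -
      have "x' - R = x - Suc k * R" unfolding x'_def SR m_def[symmetric] by simp
      thus ?thesis unfolding D_def by (simp add: algebra_simps)
    qed
    finally show ?thesis using True by simp
  qed
  finally show ?case .
qed

lemma geom_le2_aux:
  fixes x :: real assumes "0 \<le> x" "x \<le> 1/2"
  shows "(\<Sum>m\<le>n. x ^ m) \<le> 2 - x ^ n"
proof (induction n)
  case 0 thus ?case by simp
next
  case (Suc n)
  have "(2 * x) * x ^ n \<le> 1 * x ^ n" using assms by (intro mult_right_mono) auto
  hence "2 * x ^ Suc n \<le> x ^ n" by (simp add: algebra_simps)
  thus ?case using Suc by simp
qed

lemma geom_le2:
  fixes x :: real assumes "0 \<le> x" "x \<le> 1/2"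
  shows "(\<Sum>m\<le>n. x ^ m) \<le> 2"
  using geom_le2_aux[OF assms, of n] assms by (smt (verit) zero_le_power)

lemma geom_le2':
  fixes x :: real assumes "0 \<le> x" "x \<le> 1/2"
  shows "(\<Sum>m<n. x ^ m) \<le> 2"
proof -
  have "(\<Sum>m<n. x ^ m) \<le> (\<Sum>m\<le>n. x ^ m)" using assms by (intro sum_mono2) auto
  thus ?thesis using geom_le2[OF assms, of n] by simp
qed

lemma P_power_bound:
  fixes P :: "complex fps" and \<tau> :: real
  assumes \<tau>: "\<tau> > 0" and P0: "\<And>j. j \<ge> R \<Longrightarrow> fps_nth P j = 0"
  defines "\<pi> \<equiv> (\<Sum>j<R. norm (fps_nth P j) * \<tau> ^ j)"
  shows "norm (fps_nth (P ^ i) l) \<le> \<pi> ^ i / \<tau> ^ l"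
proof (induction i arbitrary: l)
  case 0
  show ?case using \<tau> by (cases "l = 0") auto
next
  case (Suc i)
  have \<pi>0: "\<pi> \<ge> 0" unfolding \<pi>_def using \<tau> by (intro sum_nonneg) auto
  have "norm (fps_nth (P ^ Suc i) l) = norm (\<Sum>j=0..l. fps_nth P j * fps_nth (P ^ i) (l - j))"
    by (simp add: fps_mult_nth)
  also have "\<dots> \<le> (\<Sum>j=0..l. norm (fps_nth P j) * (\<pi> ^ i / \<tau> ^ (l - j)))"
  proof (rule order_trans[OF norm_sum], intro sum_mono)
    fix j assume "j \<in> {0..l}"
    show "norm (fps_nth P j * fps_nth (P ^ i) (l - j)) \<le> norm (fps_nth P j) * (\<pi> ^ i / \<tau> ^ (l - j))"
      unfolding norm_mult by (intro mult_left_mono Suc.IH) auto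
  qed
  also have "\<dots> = (\<pi> ^ i / \<tau> ^ l) * (\<Sum>j=0..l. norm (fps_nth P j) * \<tau> ^ j)"
  proof -
    have "\<And>j. j \<in> {0..l} \<Longrightarrow> norm (fps_nth P j) * (\<pi> ^ i / \<tau> ^ (l - j)) = (\<pi> ^ i / \<tau> ^ l) * (norm (fps_nth P j) * \<tau> ^ j)"
    proof -
      fix j assume "j \<in> {0..l}"
      hence "\<tau> ^ l = \<tau> ^ j * \<tau> ^ (l - j)" by (simp add: power_add[symmetric])
      thus "norm (fps_nth P j) * (\<pi> ^ i / \<tau> ^ (l - j)) = (\<pi> ^ i / \<tau> ^ l) * (norm (fps_nth P j) * \<tau> ^ j)"
        using \<tau> by (simp add: field_simps)
    qed
    thus ?thesis by (simp add: sum_distrib_left)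
  qed
  also have "(\<Sum>j=0..l. norm (fps_nth P j) * \<tau> ^ j) \<le> \<pi>"
  proof -
    have "(\<Sum>j=0..l. norm (fps_nth P j) * \<tau> ^ j) = (\<Sum>j\<in>{0..l} \<inter> {..<R}. norm (fps_nth P j) * \<tau> ^ j)"
      using P0 by (intro sum.mono_neutral_right) auto
    also have "\<dots> \<le> \<pi>" unfolding \<pi>_def using \<tau> by (intro sum_mono2) auto
    finally show ?thesis .
  qed
  hence "(\<pi> ^ i / \<tau> ^ l) * (\<Sum>j=0..l. norm (fps_nth P j) * \<tau> ^ j) \<le> (\<pi> ^ i / \<tau> ^ l) * \<pi>"
    using \<tau> \<pi>0 by (intro mult_left_mono) auto
  finally show ?case by (simp add: field_simps)
qed

lemma fps_coeff_geom_bound: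
  fixes F :: "complex fps"
  assumes "fps_conv_radius F > 0"
  shows "\<exists>M>0. \<exists>w\<ge>1. \<forall>m. norm (fps_nth F m) \<le> M * w ^ m"
proof -
  obtain \<rho> where \<rho>: "0 < ereal \<rho>" "ereal \<rho> < fps_conv_radius F"
    using ereal_dense2[OF assms] by blast
  define r where "r = min 1 \<rho>"
  have r: "r > 0" "r \<le> 1" using \<rho> unfolding r_def by auto
  have "ereal r \<le> ereal \<rho>" unfolding r_def by simp
  hence "ereal r < fps_conv_radius F" using \<rho>(2) by (rule order.strict_trans1)
  hence "ereal (norm (complex_of_real r)) < fps_conv_radius F" using r by simp
  hence sm: "summable (\<lambda>n. norm (fps_nth F n * complex_of_real r ^ n))" by (rule norm_summable_fps)
  define S where "S = (\<Sum>n. norm (fps_nth F n * complex_of_real r ^ n))"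
  have "norm (fps_nth F m) \<le> (S + 1) * (1 / r) ^ m" for m
  proof -
    have "(\<Sum>n\<in>{m}. norm (fps_nth F n * complex_of_real r ^ n)) \<le> S"
      unfolding S_def by (rule sum_le_suminf[OF sm]) auto
    hence "norm (fps_nth F m) * r ^ m \<le> S" using r by (simp add: norm_mult norm_power)
    hence "norm (fps_nth F m) \<le> S / r ^ m" using r by (simp add: field_simps)
    also have "\<dots> \<le> (S + 1) / r ^ m" using r by (simp add: divide_right_mono)
    finally show ?thesis by (simp add: power_divide)
  qed
  moreover have "S \<ge> 0" unfolding S_def by (intro suminf_nonneg sm) auto
  moreover have "1 / r \<ge> 1" using r by simp
  ultimately show ?thesis by (intro exI[of _ "S+1"] conjI exI[of _ "1/r"]) auto
qed

lemma tri_swap: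
  fixes n :: nat and f :: "nat \<Rightarrow> nat \<Rightarrow> real"
  shows "(\<Sum>m\<in>{0..n}. \<Sum>k\<in>{2..m}. f m k) = (\<Sum>k\<in>{2..n}. \<Sum>m\<in>{k..n}. (f m k :: real))"
proof -
  have "(\<Sum>m\<in>{0..n}. \<Sum>k\<in>{2..m}. f m k) = (\<Sum>m\<in>{0..n}. \<Sum>k\<in>{k\<in>{0..n}. 2 \<le> k \<and> k \<le> m}. f m k)"
    by (intro sum.cong refl) auto
  also have "\<dots> = (\<Sum>k\<in>{0..n}. \<Sum>m | m \<in> {0..n} \<and> 2 \<le> k \<and> k \<le> m. f m k)"
    by (rule sum.swap_restrict) auto
  also have "\<dots> = (\<Sum>k\<in>{0..n}. if 2 \<le> k then (\<Sum>m\<in>{k..n}. f m k) else 0)"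
    by (intro sum.cong refl) (auto intro!: sum.cong)
  also have "\<dots> = (\<Sum>k\<in>{k\<in>{0..n}. 2 \<le> k}. \<Sum>m\<in>{k..n}. f m k)"
    by (rule sum.inter_filter[symmetric]) simp
  also have "{k\<in>{0..n}. 2 \<le> k} = {2..n}" by auto
  finally show ?thesis .
qed

lemma AP_power_eq:
  fixes A :: "complex fps"
  assumes "j < R"
  shows "fps_nth (A ^ i) j = fps_nth (fps_cutoff R A ^ i) j"
  using assms
proof (induction i arbitrary: j)
  case 0 thus ?case by simp
next
  case (Suc i)
  have "fps_nth (A ^ Suc i) j = (\<Sum>t=0..j. fps_nth A t * fps_nth (A ^ i) (j - t))" by (simp add: fps_mult_nth)
  also have "\<dots> = (\<Sum>t=0..j. fps_nth (fps_cutoff R A) t * fps_nth (fps_cutoff R A ^ i) (j - t))"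
    using Suc by (intro sum.cong refl) (auto simp: fps_cutoff_nth)
  also have "\<dots> = fps_nth (fps_cutoff R A ^ Suc i) j" by (simp add: fps_mult_nth)
  finally show ?case .
qed

lemma sum_geom_shift_le2:
  fixes q :: real assumes "0 \<le> q" "q \<le> 1/2"
  shows "(\<Sum>m\<in>{k..n}. q ^ (m - k)) \<le> 2"
proof -
  have "(\<Sum>m\<in>{k..n}. q ^ (m - k)) = (\<Sum>y\<in>(\<lambda>m. m - k) ` {k..n}. q ^ y)"
    by (subst sum.reindex) (auto simp: inj_on_def)
  also have "\<dots> \<le> (\<Sum>y\<le>n. q ^ y)" using assms by (intro sum_mono2) auto
  also have "\<dots> \<le> 2" by (rule geom_le2[OF assms])
  finally show ?thesis .
qed

lemma partB:
  fixes Hf A :: "complex fps"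
  assumes Hb: "\<And>m. norm (fps_nth Hf m) \<le> M * w ^ m" and M: "M > 0" and w: "w \<ge> 1"
    and A0: "fps_nth A 0 = 0" and Ab: "\<And>i. norm (fps_nth A i) \<le> sg K l a p i"
    and K: "K > 0" and l: "l > 0" and a: "a \<ge> 1" and R: "R \<ge> 1"
  shows "\<exists>C. \<forall>n\<ge>2*R. norm (fps_nth (Hf oo A) n -
            (\<Sum>j<R. fps_nth (fps_deriv Hf oo A) j * fps_nth A (n-j))) \<le> C * sg K l a p (n-R)"
proof -
  define P where "P = fps_cutoff R A"
  define Q where "Q = A - P"
  have Pn: "\<And>i. fps_nth P i = (if i < R then fps_nth A i else 0)" by (simp add: P_def fps_cutoff_nth)
  have Qn: "\<And>i. fps_nth Q i = (if i < R then 0 else fps_nth A i)" by (simp add: Q_def Pn)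
  have AQP: "A = Q + P" by (simp add: Q_def)
  have P00: "fps_nth P 0 = 0" using A0 by (simp add: Pn)
  have sgp: "\<And>i. sg K l a p i > 0" using sg_pos[OF K l] .
  define SA where "SA = (\<Sum>j<R. norm (fps_nth A j))"
  have SA0: "SA \<ge> 0" unfolding SA_def by (intro sum_nonneg) auto
  define \<tau> where "\<tau> = min 1 (1 / (4 * w * (1 + SA)))"
  have \<tau>: "\<tau> > 0" "\<tau> \<le> 1" unfolding \<tau>_def using w SA0 by auto
  define \<pi> where "\<pi> = (\<Sum>j<R. norm (fps_nth P j) * \<tau> ^ j)"
  have \<pi>0: "\<pi> \<ge> 0" unfolding \<pi>_def using \<tau> by (intro sum_nonneg) auto
  have \<pi>le: "\<pi> \<le> \<tau> * SA"
  proof -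
    have "norm (fps_nth P j) * \<tau> ^ j \<le> \<tau> * norm (fps_nth A j)" for j
    proof (cases j)
      case 0 thus ?thesis using P00 \<tau> by simp
    next
      case (Suc j')
      have "\<tau> ^ j \<le> \<tau>" using \<tau> Suc by (simp add: power_le_one mult_left_le)
      moreover have "norm (fps_nth P j) \<le> norm (fps_nth A j)" by (simp add: Pn)
      ultimately show ?thesis using \<tau> by (simp add: mult_mono' mult.commute)
    qed
    hence "\<pi> \<le> (\<Sum>j<R. \<tau> * norm (fps_nth A j))" unfolding \<pi>_def by (intro sum_mono) auto
    thus ?thesis by (simp add: SA_def sum_distrib_left)
  qed
  define q where "q = 2 * w * \<pi>"
  have q0: "q \<ge> 0" unfolding q_def using w \<pi>0 by simp
  have q2: "q \<le> 1/2"
  proof -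
    have "q \<le> 2 * w * (\<tau> * SA)" unfolding q_def using \<pi>le w by (intro mult_left_mono) auto
    also have "\<tau> * SA \<le> SA / (4 * w * (1 + SA))"
    proof -
      have "\<tau> \<le> 1 / (4 * w * (1 + SA))" unfolding \<tau>_def by simp
      hence "\<tau> * SA \<le> 1 / (4 * w * (1 + SA)) * SA" using SA0 by (rule mult_right_mono)
      thus ?thesis by simp
    qed
    also have "2 * w * (SA / (4 * w * (1 + SA))) = SA / (2 * (1 + SA))"
    proof -
      have "\<forall>X>0. 2 * w * (SA / (4 * w * X)) = SA / (2 * X)" using w by (auto simp: field_simps)
      moreover have "1 + SA > 0" using SA0 by simp
      ultimately show ?thesis by blast
    qed
    also have "\<dots> \<le> 1/2" using SA0 by (simp add: field_simps)
    finally show ?thesis using w by (simp add: mult_left_mono)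
  qed
  define c where "c = 1 / \<tau>"
  have c: "c \<ge> 1" "c > 0" unfolding c_def using \<tau> by auto
  have Ppow: "\<And>i j. norm (fps_nth (P ^ i) j) \<le> \<pi> ^ i * c ^ j"
  proof -
    fix i j
    have "norm (fps_nth (P ^ i) j) \<le> \<pi> ^ i / \<tau> ^ j"
      unfolding \<pi>_def by (rule P_power_bound[OF \<tau>(1)]) (simp add: Pn)
    thus "norm (fps_nth (P ^ i) j) \<le> \<pi> ^ i * c ^ j" by (simp add: c_def power_divide)
  qed
  define D where "D = (2 + 4 * real (R+1+p)) * sg K l a p R"
  have D0: "D > 0" unfolding D_def using sgp by (intro mult_pos_pos) auto
  define Vb where "Vb = (\<lambda>k i. if k * R \<le> i then D ^ (k-1) * sg K l a p (i - (k-1)*R) else 0)"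
  have Qpow: "\<And>(k::nat) (i::nat). k \<ge> 1 \<Longrightarrow> norm (fps_nth (Q ^ k) i) \<le> Vb k i"
  proof -
    fix k i :: nat assume k: "k \<ge> 1"
    then obtain k' where k': "k = Suc k'" by (cases k) auto
    have "norm (fps_nth (Q ^ Suc k') i) \<le> (if Suc k' * R \<le> i then D ^ k' * sg K l a p (i - k' * R) else 0)"
      unfolding D_def by (rule Q_power_bound[OF K l a R]) (auto simp: Qn Ab intro: less_imp_le sgp)
    thus "norm (fps_nth (Q ^ k) i) \<le> Vb k i" unfolding Vb_def k' by (simp only: diff_Suc_1 if_True if_False)
  qed
  obtain C1 where C1: "C1 > 0" "\<And>N (S::nat set) e. finite S \<Longrightarrow> inj_on e S \<Longrightarrow> (\<forall>x\<in>S. e x \<le> N) \<Longrightarrow>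
            (\<Sum>x\<in>S. sg K l a p (e x) / c ^ (e x)) \<le> C1 * (sg K l a p N / c ^ N)"
    using sg_usum[OF K l c(2) a] by blast
  define E where "E = max 1 (2 * w * D)"
  have E: "E \<ge> 1" "E > 0" unfolding E_def by auto
  obtain C2 where C2: "C2 > 0" "\<And>N (S::nat set) e. finite S \<Longrightarrow> inj_on e S \<Longrightarrow> (\<forall>x\<in>S. e x \<le> N) \<Longrightarrow>
            (\<Sum>x\<in>S. sg K l a p (e x) / E ^ (e x)) \<le> C2 * (sg K l a p N / E ^ N)"
    using sg_usum[OF K l E(2) a] by blast
  define d where "d = (\<lambda>j. fps_nth (fps_deriv Hf oo A) j)"
  define h where "h = (\<lambda>m. fps_nth Hf m)"
  define CC where "CC = 2 * M * c ^ R * C1 / sg K l a p 0 + 2 * M * w * C1 * c ^ R + 4 * M * w * C1 * C2 * E ^ R"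
  have main: "norm (fps_nth (Hf oo A) n - (\<Sum>j<R. d j * fps_nth A (n-j))) \<le> CC * sg K l a p (n-R)"
    if n: "n \<ge> 2 * R" for n
  proof -
    define T where "T = (\<lambda>m k. of_nat (m choose k) * fps_nth (Q ^ k * P ^ (m - k)) n)"
    define S0 where "S0 = (\<Sum>m=0..n. h m * T m 0)"
    define S1 where "S1 = (\<Sum>m=0..n. h m * T m 1)"
    define S2 where "S2 = (\<Sum>m=0..n. h m * (\<Sum>k\<in>{2..m}. T m k))"
    define main where "main = (\<Sum>j<R. d j * fps_nth A (n-j))"
    have decomp: "fps_nth (Hf oo A) n = S0 + S1 + S2"
    proof -
      have comp: "fps_nth (Hf oo A) n = (\<Sum>m=0..n. h m * fps_nth (A^m) n)" by (simp add: fps_compose_nth h_def)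
      have Am: "fps_nth (A^m) n = (\<Sum>k\<le>m. T m k)" for m
      proof -
        have "A ^ m = (\<Sum>k\<le>m. of_nat (m choose k) * (Q ^ k * P ^ (m - k)))"
          unfolding AQP binomial_ring by (simp add: mult.assoc)
        thus ?thesis unfolding T_def by (simp add: fps_sum_nth fps_mult_of_nat_nth)
      qed
      have spl: "(\<Sum>k\<le>m. T m k) = T m 0 + T m 1 + (\<Sum>k\<in>{2..m}. T m k)" for m
      proof (cases "m = 0")
        case True thus ?thesis by (simp add: T_def)
      next
        case False
        have "(\<Sum>k\<le>m. T m k) = (\<Sum>k\<in>{0..m}. T m k)" by (simp add: atLeast0AtMost)
        also have "\<dots> = T m 0 + (\<Sum>k\<in>{Suc 0..m}. T m k)" by (rule sum.atLeast_Suc_atMost) simp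
        also have "(\<Sum>k\<in>{Suc 0..m}. T m k) = T m 1 + (\<Sum>k\<in>{Suc (Suc 0)..m}. T m k)"
          using False by (subst sum.atLeast_Suc_atMost) auto
        finally show ?thesis by (simp add: numeral_2_eq_2 add.assoc)
      qed
      have "fps_nth (Hf oo A) n = (\<Sum>m=0..n. h m * T m 0 + h m * T m 1 + h m * (\<Sum>k\<in>{2..m}. T m k))"
        unfolding comp Am spl by (simp add: algebra_simps)
      thus ?thesis unfolding S0_def S1_def S2_def by (simp add: sum.distrib)
    qed
    have bS0: "norm S0 \<le> 2 * M * c ^ R * C1 / sg K l a p 0 * sg K l a p (n-R)"
    proof -
      have wq: "w * \<pi> \<ge> 0" "w * \<pi> \<le> 1/2" using q0 q2 w \<pi>0 unfolding q_def by auto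
      have "norm S0 \<le> (\<Sum>m=0..n. norm (h m * T m 0))" unfolding S0_def by (rule norm_sum)
      also have "\<dots> \<le> (\<Sum>m=0..n. (M * w ^ m) * (\<pi> ^ m * c ^ n))"
      proof (intro sum_mono)
        fix m assume "m \<in> {0..n}"
        have "T m 0 = fps_nth (P ^ m) n" by (simp add: T_def)
        thus "norm (h m * T m 0) \<le> (M * w ^ m) * (\<pi> ^ m * c ^ n)"
          unfolding norm_mult h_def using Hb Ppow M w by (intro mult_mono) auto
      qed
      also have "\<dots> = M * c ^ n * (\<Sum>m\<le>n. (w * \<pi>) ^ m)"
        by (simp add: sum_distrib_left atLeast0AtMost power_mult_distrib algebra_simps)
      also have "\<dots> \<le> M * c ^ n * 2" using M c by (intro mult_left_mono geom_le2 wq) auto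
      also have "c ^ n \<le> c ^ R * C1 / sg K l a p 0 * sg K l a p (n-R)"
      proof -
        have "(\<Sum>x\<in>{0::nat}. sg K l a p ((\<lambda>_. 0) x) / c ^ ((\<lambda>_. 0::nat) x)) \<le> C1 * (sg K l a p (n-R) / c ^ (n-R))"
          by (rule C1(2)) auto
        hence "sg K l a p 0 * c ^ (n-R) \<le> C1 * sg K l a p (n-R)" using c by (simp add: field_simps)
        moreover have "c ^ n = c ^ R * c ^ (n - R)" using n by (simp add: power_add[symmetric])
        ultimately show ?thesis using sgp[of 0] c by (simp add: field_simps mult_left_mono)
      qed
      hence "M * c ^ n * 2 \<le> M * (c ^ R * C1 / sg K l a p 0 * sg K l a p (n-R)) * 2" using M by (intro mult_right_mono mult_left_mono) auto
      finally show ?thesis by (simp add: algebra_simps)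
    qed
    have bS1: "norm (S1 - main) \<le> 2 * M * w * C1 * c ^ R * sg K l a p (n-R)"
    proof -
      define G where "G = (\<lambda>j. \<Sum>i<n. h (Suc i) * of_nat (Suc i) * fps_nth (P ^ i) j)"
      have S1eq: "S1 = (\<Sum>j=0..n. fps_nth Q (n-j) * G j)"
      proof -
        have T1: "T m 1 = of_nat m * (\<Sum>j=0..n. fps_nth (P^(m-1)) j * fps_nth Q (n-j))" for m
        proof -
          have "Q ^ 1 * P ^ (m - 1) = P ^ (m - 1) * Q" by (simp add: mult.commute)
          hence "fps_nth (Q ^ 1 * P ^ (m - 1)) n = (\<Sum>j=0..n. fps_nth (P^(m-1)) j * fps_nth Q (n-j))"
            by (simp only: fps_mult_nth)
          thus ?thesis by (simp add: T_def)
        qed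
        have "S1 = (\<Sum>m=0..n. \<Sum>j=0..n. h m * of_nat m * fps_nth (P^(m-1)) j * fps_nth Q (n-j))"
          unfolding S1_def T1 by (simp add: sum_distrib_left mult.assoc)
        also have "\<dots> = (\<Sum>j=0..n. \<Sum>m=0..n. h m * of_nat m * fps_nth (P^(m-1)) j * fps_nth Q (n-j))"
          by (rule sum.swap)
        also have "\<dots> = (\<Sum>j=0..n. fps_nth Q (n-j) * G j)"
        proof (intro sum.cong refl)
          fix j
          have "(\<Sum>m=0..n. h m * of_nat m * fps_nth (P^(m-1)) j * fps_nth Q (n-j))
                = fps_nth Q (n-j) * (\<Sum>m=0..n. h m * of_nat m * fps_nth (P^(m-1)) j)"
            by (simp add: sum_distrib_left algebra_simps)
          also have "(\<Sum>m=0..n. h m * of_nat m * fps_nth (P^(m-1)) j)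
                     = (\<Sum>m\<in>{Suc 0..n}. h m * of_nat m * fps_nth (P^(m-1)) j)"
            by (subst sum.atLeast_Suc_atMost) auto
          also have "\<dots> = G j" unfolding G_def by (subst sum.atLeast1_atMost_eq) (simp add: mult_ac)
          finally show "(\<Sum>m=0..n. h m * of_nat m * fps_nth (P^(m-1)) j * fps_nth Q (n-j)) = fps_nth Q (n-j) * G j" .
        qed
        finally show ?thesis .
      qed
      have Gd: "G j = d j" if j: "j < R" for j
      proof -
        have "d j = (\<Sum>i=0..j. of_nat (Suc i) * h (Suc i) * fps_nth (A^i) j)"
          by (simp add: d_def fps_compose_nth fps_deriv_nth h_def)
        also have "\<dots> = (\<Sum>i=0..j. of_nat (Suc i) * h (Suc i) * fps_nth (P^i) j)"
          using AP_power_eq[OF j] by (simp add: P_def)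
        also have "\<dots> = G j" unfolding G_def
        proof (intro sum.mono_neutral_cong_left)
          show "{0..j} \<subseteq> {..<n}" using j n R by auto
          show "\<forall>i\<in>{..<n} - {0..j}. h (Suc i) * of_nat (Suc i) * fps_nth (P ^ i) j = 0"
            using startsby_zero_power_prefix[OF P00] by auto
        qed (auto simp: mult_ac)
        finally show ?thesis by simp
      qed
      have main_eq: "main = (\<Sum>j<R. fps_nth Q (n-j) * G j)"
        unfolding main_def using n by (intro sum.cong refl) (auto simp: Gd Qn)
      have "S1 - main = (\<Sum>j\<in>{R..n}. fps_nth Q (n-j) * G j)"
      proof -
        have "{0..n} = {..<R} \<union> {R..n}" using n by auto
        hence "(\<Sum>j=0..n. fps_nth Q (n-j) * G j) = (\<Sum>j<R. fps_nth Q (n-j) * G j) + (\<Sum>j\<in>{R..n}. fps_nth Q (n-j) * G j)"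
          by (simp add: sum.union_disjoint ivl_disj_int)
        thus ?thesis unfolding S1eq main_eq by simp
      qed
      hence "norm (S1 - main) \<le> (\<Sum>j\<in>{R..n}. norm (fps_nth Q (n-j)) * norm (G j))"
        by (simp add: norm_sum norm_mult[symmetric])
      also have "\<dots> \<le> (\<Sum>j\<in>{R..n}. sg K l a p (n-j) * (2 * M * w * c ^ j))"
      proof (intro sum_mono mult_mono)
        fix j
        show "norm (fps_nth Q (n-j)) \<le> sg K l a p (n-j)" using Ab[of "n-j"] sgp[of "n-j"] by (simp add: Qn)
        show "0 \<le> sg K l a p (n-j)" using sgp[of "n-j"] by simp
        show "0 \<le> norm (G j)" by simp
        have "norm (G j) \<le> (\<Sum>i<n. (M * w ^ Suc i) * real (Suc i) * (\<pi> ^ i * c ^ j))"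
          unfolding G_def
        proof (rule order_trans[OF norm_sum], intro sum_mono)
          fix i assume "i \<in> {..<n}"
          have "norm (h (Suc i) * of_nat (Suc i) * fps_nth (P ^ i) j) = norm (h (Suc i)) * real (Suc i) * norm (fps_nth (P^i) j)"
            by (simp only: norm_mult norm_of_nat)
          also have "\<dots> \<le> (M * w ^ Suc i) * real (Suc i) * (\<pi> ^ i * c ^ j)"
          proof (intro mult_mono order.refl)
            show "norm (h (Suc i)) \<le> M * w ^ Suc i" unfolding h_def by (rule Hb)
            show "norm (fps_nth (P^i) j) \<le> \<pi> ^ i * c ^ j" by (rule Ppow)
            show "0 \<le> M * w ^ Suc i" using M w by simp
          qed (use M w in auto)
          finally show "norm (h (Suc i) * of_nat (Suc i) * fps_nth (P ^ i) j) \<le> (M * w ^ Suc i) * real (Suc i) * (\<pi> ^ i * c ^ j)" .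
        qed
        also have "\<dots> \<le> (\<Sum>i<n. M * w * c ^ j * q ^ i)"
        proof (intro sum_mono)
          fix i
          have "real (Suc i) \<le> 2 ^ i"
          proof -
            have "Suc i \<le> 2 ^ i" by (induction i) auto
            thus ?thesis by (metis of_nat_le_iff of_nat_numeral of_nat_power)
          qed
          hence "real (Suc i) * (w ^ i * \<pi> ^ i) \<le> 2 ^ i * (w ^ i * \<pi> ^ i)"
            using w \<pi>0 by (intro mult_right_mono) auto
          hence "real (Suc i) * (w ^ i * \<pi> ^ i) \<le> q ^ i" unfolding q_def by (simp add: power_mult_distrib)
          hence "(M * w * c ^ j) * (real (Suc i) * (w ^ i * \<pi> ^ i)) \<le> (M * w * c ^ j) * q ^ i"
            using M w c by (intro mult_left_mono) auto
          thus "(M * w ^ Suc i) * real (Suc i) * (\<pi> ^ i * c ^ j) \<le> M * w * c ^ j * q ^ i"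
            by (simp add: algebra_simps)
        qed
        also have "\<dots> = M * w * c ^ j * (\<Sum>i<n. q ^ i)" by (simp add: sum_distrib_left)
        also have "\<dots> \<le> M * w * c ^ j * 2" using M w c by (intro mult_left_mono geom_le2' q0 q2) auto
        finally show "norm (G j) \<le> 2 * M * w * c ^ j" by simp
      qed
      also have "\<dots> = 2 * M * w * c ^ n * (\<Sum>j\<in>{R..n}. sg K l a p (n-j) / c ^ (n-j))"
      proof -
        have "\<And>j. j \<in> {R..n} \<Longrightarrow> sg K l a p (n-j) * (2 * M * w * c ^ j) = 2 * M * w * c ^ n * (sg K l a p (n-j) / c ^ (n-j))"
        proof -
          fix j assume "j \<in> {R..n}"
          hence "c ^ n = c ^ j * c ^ (n - j)" by (simp add: power_add[symmetric])
          thus "sg K l a p (n-j) * (2 * M * w * c ^ j) = 2 * M * w * c ^ n * (sg K l a p (n-j) / c ^ (n-j))"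
            using c by (simp add: field_simps)
        qed
        thus ?thesis by (simp add: sum_distrib_left)
      qed
      also have "(\<Sum>j\<in>{R..n}. sg K l a p (n-j) / c ^ (n-j)) \<le> C1 * (sg K l a p (n-R) / c ^ (n-R))"
        by (rule C1(2)) (auto simp: inj_on_def)
      hence "2 * M * w * c ^ n * (\<Sum>j\<in>{R..n}. sg K l a p (n-j) / c ^ (n-j)) \<le> 2 * M * w * c ^ n * (C1 * (sg K l a p (n-R) / c ^ (n-R)))"
        using M w c by (intro mult_left_mono) auto
      also have "2 * M * w * c ^ n * (C1 * (sg K l a p (n-R) / c ^ (n-R))) = 2 * M * w * C1 * c ^ R * sg K l a p (n-R)"
      proof -
        have "c ^ n = c ^ R * c ^ (n - R)" using n by (simp add: power_add[symmetric])
        thus ?thesis using c by (simp add: field_simps)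
      qed
      finally show ?thesis .
    qed
    have bS2: "norm S2 \<le> 4 * M * w * C1 * C2 * E ^ R * sg K l a p (n-R)"
    proof -
      define W' where "W' = (\<lambda>k. if k * R \<le> n then D^(k-1) * C1 * sg K l a p (n - (k-1)*R) else 0)"
      have W'0: "W' k \<ge> 0" for k unfolding W'_def using D0 C1 sgp by (auto intro!: mult_nonneg_nonneg less_imp_le)
      have Vb0: "Vb k i \<ge> 0" for k i unfolding Vb_def using D0 sgp by (auto intro!: mult_nonneg_nonneg less_imp_le)
      have Tb: "norm (T m k) \<le> real (m choose k) * (\<pi>^(m-k) * W' k)" if k: "2 \<le> k" "k \<le> m" for m k
      proof -
        have "norm (fps_nth (Q^k * P^(m-k)) n) \<le> (\<Sum>i=0..n. norm (fps_nth (Q^k) i) * norm (fps_nth (P^(m-k)) (n-i)))"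
          unfolding fps_mult_nth by (rule order_trans[OF norm_sum]) (simp add: norm_mult)
        also have "\<dots> \<le> (\<Sum>i=0..n. Vb k i * (\<pi>^(m-k) * c^(n-i)))"
        proof (intro sum_mono mult_mono)
          fix i
          show "norm (fps_nth (Q^k) i) \<le> Vb k i" using k by (intro Qpow) auto
          show "norm (fps_nth (P^(m-k)) (n-i)) \<le> \<pi>^(m-k) * c^(n-i)" by (rule Ppow)
          show "0 \<le> Vb k i" by (rule Vb0)
        qed simp
        also have "\<dots> = \<pi>^(m-k) * (\<Sum>i=0..n. Vb k i * c^(n-i))" by (simp add: sum_distrib_left mult_ac)
        also have "(\<Sum>i=0..n. Vb k i * c^(n-i)) \<le> W' k"
        proof (cases "k * R \<le> n")
          case False
          have "(\<Sum>i=0..n. Vb k i * c^(n-i)) = 0" using False by (intro sum.neutral) (auto simp: Vb_def)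
          thus ?thesis using False by (simp add: W'_def)
        next
          case True
          define N' where "N' = n - (k-1)*R"
          have kR: "(k-1)*R + R = k * R" using k by (cases k) auto
          have "(\<Sum>i=0..n. Vb k i * c^(n-i)) = (\<Sum>i\<in>{k*R..n}. Vb k i * c^(n-i))"
            by (intro sum.mono_neutral_right) (auto simp: Vb_def)
          also have "\<dots> = D^(k-1) * c^N' * (\<Sum>i\<in>{k*R..n}. sg K l a p (i - (k-1)*R) / c^(i - (k-1)*R))"
          proof -
            have "\<And>i. i \<in> {k*R..n} \<Longrightarrow> Vb k i * c^(n-i) = D^(k-1) * c^N' * (sg K l a p (i - (k-1)*R) / c^(i - (k-1)*R))"
            proof -
              fix i assume i: "i \<in> {k*R..n}"
              have "c ^ N' = c ^ (i - (k-1)*R) * c ^ (n - i)"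
                unfolding N'_def power_add[symmetric] using i kR by (intro arg_cong[where f="(^) c"]) auto
              thus "Vb k i * c^(n-i) = D^(k-1) * c^N' * (sg K l a p (i - (k-1)*R) / c^(i - (k-1)*R))"
                using i c unfolding Vb_def by (simp add: field_simps)
            qed
            thus ?thesis by (simp add: sum_distrib_left)
          qed
          also have "(\<Sum>i\<in>{k*R..n}. sg K l a p (i - (k-1)*R) / c^(i - (k-1)*R)) \<le> C1 * (sg K l a p N' / c ^ N')"
          proof (rule C1(2))
            show "inj_on (\<lambda>i. i - (k-1)*R) {k*R..n}" using kR by (auto simp: inj_on_def)
            show "\<forall>x\<in>{k*R..n}. x - (k-1)*R \<le> N'" unfolding N'_def by auto
          qed auto
          hence "D^(k-1) * c^N' * (\<Sum>i\<in>{k*R..n}. sg K l a p (i - (k-1)*R) / c^(i - (k-1)*R)) \<le> D^(k-1) * c^N' * (C1 * (sg K l a p N' / c ^ N'))"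
            using D0 c by (intro mult_left_mono) auto
          also have "\<dots> = W' k" using True c unfolding W'_def N'_def by (simp add: field_simps)
          finally show ?thesis .
        qed
        hence "\<pi>^(m-k) * (\<Sum>i=0..n. Vb k i * c^(n-i)) \<le> \<pi>^(m-k) * W' k" using \<pi>0 by (intro mult_left_mono) auto
        finally have "norm (fps_nth (Q^k * P^(m-k)) n) \<le> \<pi>^(m-k) * W' k" .
        thus ?thesis unfolding T_def norm_mult by (simp add: mult_left_mono)
      qed
      have "norm S2 \<le> (\<Sum>m=0..n. norm (h m) * (\<Sum>k\<in>{2..m}. norm (T m k)))"
        unfolding S2_def
        by (rule order_trans[OF norm_sum], intro sum_mono) (auto simp: norm_mult intro!: mult_left_mono norm_sum)
      also have "\<dots> \<le> (\<Sum>m=0..n. \<Sum>k\<in>{2..m}. M * (2*w)^k * q^(m-k) * W' k)"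
      proof (intro sum_mono)
        fix m assume "m \<in> {0..n}"
        have "norm (h m) * (\<Sum>k\<in>{2..m}. norm (T m k)) \<le> (M * w^m) * (\<Sum>k\<in>{2..m}. real (m choose k) * (\<pi>^(m-k) * W' k))"
          using Hb M w Tb unfolding h_def by (intro mult_mono sum_mono) (auto intro!: sum_nonneg)
        also have "\<dots> = (\<Sum>k\<in>{2..m}. M * (w^m * real (m choose k) * \<pi>^(m-k)) * W' k)"
          by (simp add: sum_distrib_left mult_ac)
        also have "\<dots> \<le> (\<Sum>k\<in>{2..m}. M * ((2*w)^k * q^(m-k)) * W' k)"
        proof (intro sum_mono mult_right_mono mult_left_mono W'0)
          fix k assume k: "k \<in> {2..m}"
          have "real (m choose k) \<le> 2 ^ m"
          proof -
            have "m choose k \<le> 2 ^ m" by (rule binomial_le_pow2)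
            thus ?thesis by (metis of_nat_le_iff of_nat_numeral of_nat_power)
          qed
          hence "w^m * real (m choose k) * \<pi>^(m-k) \<le> w^m * 2^m * \<pi>^(m-k)"
            using w \<pi>0 by (intro mult_right_mono mult_left_mono) auto
          also have "\<dots> = (2*w)^k * q^(m-k)"
          proof -
            have "m = k + (m - k)" using k by simp
            hence "w^m * 2^m = (2*w)^k * (2*w)^(m-k)" by (metis power_add power_mult_distrib mult.commute)
            thus ?thesis unfolding q_def by (simp add: power_mult_distrib)
          qed
          finally show "w^m * real (m choose k) * \<pi>^(m-k) \<le> (2*w)^k * q^(m-k)" .
        qed (use M in auto)
        finally show "norm (h m) * (\<Sum>k\<in>{2..m}. norm (T m k)) \<le> (\<Sum>k\<in>{2..m}. M * (2*w)^k * q^(m-k) * W' k)"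
          by (simp add: mult_ac)
      qed
      also have "\<dots> = (\<Sum>k\<in>{2..n}. \<Sum>m\<in>{k..n}. M * (2*w)^k * q^(m-k) * W' k)" by (rule tri_swap)
      also have "\<dots> = (\<Sum>k\<in>{2..n}. M * (2*w)^k * W' k * (\<Sum>m\<in>{k..n}. q^(m-k)))"
        by (simp add: sum_distrib_left mult_ac)
      also have "\<dots> \<le> (\<Sum>k\<in>{2..n}. M * (2*w)^k * W' k * 2)"
        using M w W'0 by (intro sum_mono mult_left_mono sum_geom_shift_le2 q0 q2) auto
      also have "\<dots> = 2 * M * (\<Sum>k\<in>{2..n}. (2*w)^k * W' k)" by (simp add: sum_distrib_left mult_ac)
      also have "(\<Sum>k\<in>{2..n}. (2*w)^k * W' k) \<le> 2 * w * C1 * C2 * E ^ R * sg K l a p (n-R)"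
      proof -
        define S' where "S' = {k\<in>{2..n}. k * R \<le> n}"
        have "(\<Sum>k\<in>{2..n}. (2*w)^k * W' k) = (\<Sum>k\<in>S'. (2*w)^k * (D^(k-1) * C1 * sg K l a p (n - (k-1)*R)))"
        proof -
          have "(\<Sum>k\<in>{2..n}. (2*w)^k * W' k) = (\<Sum>k\<in>{2..n}. if k * R \<le> n then (2*w)^k * (D^(k-1) * C1 * sg K l a p (n - (k-1)*R)) else 0)"
            by (intro sum.cong refl) (simp add: W'_def)
          also have "\<dots> = (\<Sum>k\<in>S'. (2*w)^k * (D^(k-1) * C1 * sg K l a p (n - (k-1)*R)))"
            unfolding S'_def by (rule sum.inter_filter[symmetric]) simp
          finally show ?thesis .
        qed
        also have "\<dots> \<le> (\<Sum>k\<in>S'. 2 * w * C1 * (E^((k-1)*R) * sg K l a p (n - (k-1)*R)))"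
        proof (intro sum_mono)
          fix k assume k: "k \<in> S'"
          have "(2*w)^k * D^(k-1) = 2 * w * (2*w*D)^(k-1)"
            using k unfolding S'_def by (cases k) (auto simp: power_mult_distrib)
          also have "(2*w*D)^(k-1) \<le> E^(k-1)" unfolding E_def using w D0 by (intro power_mono) auto
          also have "E^(k-1) \<le> E^((k-1)*R)" using E R by (intro power_increasing) auto
          finally have "(2*w)^k * D^(k-1) \<le> 2 * w * E^((k-1)*R)" using w by (simp add: mult_left_mono)
          hence "((2*w)^k * D^(k-1)) * (C1 * sg K l a p (n - (k-1)*R)) \<le> (2 * w * E^((k-1)*R)) * (C1 * sg K l a p (n - (k-1)*R))"
            using C1 sgp by (intro mult_right_mono) (auto intro: less_imp_le)
          thus "(2*w)^k * (D^(k-1) * C1 * sg K l a p (n - (k-1)*R)) \<le> 2 * w * C1 * (E^((k-1)*R) * sg K l a p (n - (k-1)*R))"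
            by (simp add: mult_ac)
        qed
        also have "\<dots> = 2 * w * C1 * E^n * (\<Sum>k\<in>S'. sg K l a p (n - (k-1)*R) / E^(n - (k-1)*R))"
        proof -
          have "\<And>k. k \<in> S' \<Longrightarrow> E^((k-1)*R) * sg K l a p (n - (k-1)*R) = E^n * (sg K l a p (n - (k-1)*R) / E^(n - (k-1)*R))"
          proof -
            fix k assume k: "k \<in> S'"
            hence "k * R \<le> n" unfolding S'_def by simp
            moreover have "(k-1)*R \<le> k*R" by simp
            ultimately have "(k-1)*R \<le> n" by (rule le_trans[rotated])
            hence "E^n = E^((k-1)*R) * E^(n - (k-1)*R)" by (simp add: power_add[symmetric])
            thus "E^((k-1)*R) * sg K l a p (n - (k-1)*R) = E^n * (sg K l a p (n - (k-1)*R) / E^(n - (k-1)*R))"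
              using E by (simp add: field_simps)
          qed
          thus ?thesis by (simp add: sum_distrib_left mult.assoc)
        qed
        also have "(\<Sum>k\<in>S'. sg K l a p (n - (k-1)*R) / E^(n - (k-1)*R)) \<le> C2 * (sg K l a p (n-R) / E^(n-R))"
        proof (rule C2(2))
          show "finite S'" unfolding S'_def by auto
          show "inj_on (\<lambda>k. n - (k-1)*R) S'"
          proof (rule inj_onI)
            fix x y assume x: "x \<in> S'" and y: "y \<in> S'" and eq: "n - (x-1)*R = n - (y-1)*R"
            have "x * R \<le> n" "y * R \<le> n" using x y unfolding S'_def by simp_all
            moreover have "(x-1)*R \<le> x*R" "(y-1)*R \<le> y*R" by simp_all
            ultimately have "(x-1)*R \<le> n" "(y-1)*R \<le> n" by linarith+
            hence "(x-1)*R = (y-1)*R" using eq by linarith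
            hence "x - 1 = y - 1" using R by simp
            thus "x = y" using x y unfolding S'_def by auto
          qed
          show "\<forall>x\<in>S'. n - (x-1)*R \<le> n - R"
          proof
            fix x assume "x \<in> S'"
            hence "1 \<le> x - 1" unfolding S'_def by auto
            hence "1 * R \<le> (x-1)*R" by (rule mult_le_mono1)
            thus "n - (x-1)*R \<le> n - R" by (intro diff_le_mono2) simp
          qed
        qed
        hence "2 * w * C1 * E^n * (\<Sum>k\<in>S'. sg K l a p (n - (k-1)*R) / E^(n - (k-1)*R)) \<le> 2 * w * C1 * E^n * (C2 * (sg K l a p (n-R) / E^(n-R)))"
          using w C1 E by (intro mult_left_mono) auto
        also have "\<dots> = 2 * w * C1 * C2 * E ^ R * sg K l a p (n-R)"
        proof -
          have "E ^ n = E ^ R * E ^ (n - R)" using n by (simp add: power_add[symmetric])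
          thus ?thesis using E by (simp add: field_simps)
        qed
        finally show ?thesis .
      qed
      hence "2 * M * (\<Sum>k\<in>{2..n}. (2*w)^k * W' k) \<le> 2 * M * (2 * w * C1 * C2 * E ^ R * sg K l a p (n-R))"
        using M by (intro mult_left_mono) auto
      finally show ?thesis by (simp add: mult_ac)
    qed
    have "norm (fps_nth (Hf oo A) n - main) = norm (S0 + (S1 - main) + S2)" by (simp add: decomp algebra_simps)
    also have "\<dots> \<le> norm S0 + norm (S1 - main) + norm S2" by (intro norm_triangle_le add_mono norm_triangle_ineq order.refl)
    also have "\<dots> \<le> CC * sg K l a p (n-R)" using bS0 bS1 bS2 unfolding CC_def by (simp add: algebra_simps)
    finally show ?thesis unfolding main_def .
  qed
  thus ?thesis unfolding d_def by blast
qed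

lemma exp_ge_pow_fact:
  fixes x :: real assumes "x \<ge> 0"
  shows "x ^ n / fact n \<le> exp x"
proof -
  have s: "summable (\<lambda>k. x ^ k / fact k)" using exp_converges[of x] by (simp add: sums_iff divide_inverse mult.commute scaleR_conv_of_real)
  have "(\<Sum>k\<in>{n}. x ^ k / fact k) \<le> (\<Sum>k. x ^ k / fact k)"
    by (rule sum_le_suminf[OF s]) (use assms in auto)
  also have "(\<Sum>k. x ^ k / fact k) = exp x" using exp_converges[of x] by (simp add: sums_iff divide_inverse mult.commute scaleR_conv_of_real)
  finally show ?thesis by simp
qed

lemma pow_le_fact_exp: "real i ^ i \<le> exp (real i) * fact i"
  using exp_ge_pow_fact[of "real i" i] by (simp add: divide_le_eq mult.commute)

lemma fact_mult_pow_le: "fact i * real i ^ p \<le> (fact (i+p) :: real)"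
proof (induction p)
  case 0 thus ?case by simp
next
  case (Suc p)
  have "fact i * real i ^ Suc p = (fact i * real i ^ p) * real i" by (simp add: algebra_simps)
  also have "\<dots> \<le> fact (i+p) * real (Suc (i+p))"
    using Suc by (intro mult_mono) auto
  also have "\<dots> = fact (i + Suc p)" by (simp add: fact_Suc algebra_simps)
  finally show ?case .
qed

lemma scale_le_sg:
  assumes a: "\<alpha> \<ge> 1" and b: "\<beta> > 0" and i: "i \<ge> 1" and p: "\<gamma> \<le> real p"
  shows "scale \<alpha> \<beta> \<gamma> i \<le> sg 1 (exp (real \<alpha>) * \<beta>) \<alpha> p i"
proof -
  have ri: "real i \<ge> 1" using i by simp
  have fi: "(fact i :: real) > 0" by simp
  define \<rho> where "\<rho> = (fact (i+p) :: real) / fact i"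
  have \<rho>1: "\<rho> \<ge> real i ^ p" unfolding \<rho>_def using fact_mult_pow_le[of i p] fi by (simp add: field_simps)
  have ip1: "real i ^ p \<ge> 1" using ri by simp
  have "real i powr \<gamma> \<le> real i powr real p" using p ri by (rule powr_mono)
  also have "\<dots> = real i ^ p" using ri by (simp add: powr_realpow)
  also have "\<dots> \<le> \<rho>" by (rule \<rho>1)
  also have "\<rho> \<le> \<rho> ^ \<alpha>" using \<rho>1 ip1 a by (intro self_le_power) auto
  finally have g: "real i powr \<gamma> \<le> \<rho> ^ \<alpha>" .
  have "scale \<alpha> \<beta> \<gamma> i = (real i ^ i) ^ \<alpha> * \<beta> ^ i * real i powr \<gamma>"
    unfolding scale_def by (simp add: power_mult[symmetric] mult.commute)
  also have "\<dots> \<le> (exp (real i) * fact i) ^ \<alpha> * \<beta> ^ i * \<rho> ^ \<alpha>"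
    using b g by (intro mult_mono power_mono pow_le_fact_exp) auto
  also have "\<dots> = (exp (real i)) ^ \<alpha> * \<beta> ^ i * (fact i * \<rho>) ^ \<alpha>"
    by (simp add: power_mult_distrib)
  also have "fact i * \<rho> = fact (i+p)" unfolding \<rho>_def using fi by simp
  also have "(exp (real i)) ^ \<alpha> = exp (real \<alpha>) ^ i"
    by (simp add: exp_of_nat_mult[symmetric] mult.commute)
  finally show ?thesis unfolding sg_def by (simp add: power_mult_distrib)
qed

lemma e_le_pow: "exp 1 \<le> (1 + 1 / real k) ^ (k+1)" if k: "k \<ge> 1"
proof -
  define x where "x = 1 + 1 / real k"
  have x: "x > 0" unfolding x_def by (simp add: add_pos_nonneg)
  have "ln (1/x) \<le> 1/x - 1" using x by (intro ln_le_minus_one) auto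
  hence "ln x \<ge> 1 - 1/x" using x by (simp add: ln_div)
  also have "1 - 1/x = 1 / real (k+1)" unfolding x_def using k by (simp add: field_simps)
  finally have "real (k+1) * ln x \<ge> 1" using k by (simp add: field_simps)
  hence "exp 1 \<le> exp (real (k+1) * ln x)" by simp
  also have "exp (real (k+1) * ln x) = exp (ln x) ^ (k+1)" by (rule exp_of_nat_mult)
  also have "\<dots> = x ^ (k+1)" using x by simp
  finally show ?thesis unfolding x_def .
qed

lemma fact_exp_le: "fact m * exp (real m) \<le> real (m+1) ^ (m+1)"
proof (induction m)
  case 0 thus ?case by simp
next
  case (Suc m)
  have "fact (Suc m) * exp (real (Suc m)) = real (m+1) * (fact m * exp (real m)) * exp 1"
    by (simp add: fact_Suc exp_add[symmetric] algebra_simps)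
  also have "\<dots> \<le> real (m+1) * real (m+1) ^ (m+1) * exp 1"
    using Suc by (intro mult_right_mono mult_left_mono) auto
  also have "\<dots> \<le> real (m+1) * real (m+1) ^ (m+1) * (1 + 1 / real (m+1)) ^ (m+2)"
  proof (intro mult_left_mono)
    show "exp 1 \<le> (1 + 1 / real (m+1)) ^ (m+2)" using e_le_pow[of "m+1"] by (simp del: of_nat_Suc of_nat_add add: numeral_2_eq_2)
  qed auto
  also have "\<dots> = real (m+2) ^ (m+2)"
  proof -
    have "1 + 1 / real (m+1) = real (m+2) / real (m+1)" by (simp add: field_simps)
    hence e: "(1 + 1 / real (m+1)) ^ (m+2) = real (m+2) ^ (m+2) / real (m+1) ^ (m+2)"
      by (simp add: power_divide)
    have u: "real (m+1) * real (m+1) ^ (m+1) = real (m+1) ^ (m+2)" by (simp add: numeral_2_eq_2)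
    have "real (m+1) ^ (m+2) > 0" by simp
    thus ?thesis unfolding e u by simp
  qed
  finally show ?case by simp
qed

lemma sg_le_scale:
  assumes a: "\<alpha> \<ge> 1" and b: "\<beta> > 0" and K: "K > 0"
    and rp: "real r - \<gamma> \<le> real (\<alpha> * r')"
    and n: "p + 1 + r' \<le> n"
  shows "sg K (exp (real \<alpha>) * \<beta>) \<alpha> p (n - (p + 1 + r'))
           \<le> (K / \<beta> ^ (p + 1 + r')) * (scale \<alpha> \<beta> \<gamma> n * (1 / real n) ^ r)"
proof -
  define R where "R = p + 1 + r'"
  define m where "m = n - R + p"
  have m1: "m + 1 = n - r'" using n unfolding m_def R_def by simp
  have rn: "real n \<ge> 1" using n by simp
  have f: "(fact m :: real) \<le> real (m+1) ^ (m+1) / exp (real m)"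
    using fact_exp_le[of m] by (simp add: field_simps)
  have "sg K (exp (real \<alpha>) * \<beta>) \<alpha> p (n - R) = K * (exp (real \<alpha>) ^ (n-R) * \<beta> ^ (n-R)) * (fact m) ^ \<alpha>"
    unfolding sg_def m_def by (simp add: power_mult_distrib)
  also have "\<dots> \<le> K * (exp (real \<alpha>) ^ (n-R) * \<beta> ^ (n-R)) * (real (m+1) ^ (m+1) / exp (real m)) ^ \<alpha>"
    using K b f by (intro mult_left_mono power_mono) auto
  also have "\<dots> = K * \<beta> ^ (n-R) * real (m+1) ^ ((m+1) * \<alpha>) * (exp (real \<alpha>) ^ (n-R) / exp (real m) ^ \<alpha>)"
  proof -
    have "(real (m+1) ^ (m+1) / exp (real m)) ^ \<alpha> = real (m+1) ^ ((m+1) * \<alpha>) / exp (real m) ^ \<alpha>"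
      by (simp only: power_divide power_mult)
    thus ?thesis by (simp add: field_simps)
  qed
  also have "exp (real \<alpha>) ^ (n-R) / exp (real m) ^ \<alpha> \<le> 1"
  proof -
    have "exp (real \<alpha>) ^ (n-R) = exp (real (n-R) * real \<alpha>)" by (simp add: exp_of_nat_mult[symmetric])
    moreover have "exp (real m) ^ \<alpha> = exp (real \<alpha> * real m)" by (simp add: exp_of_nat_mult[symmetric])
    moreover have "real (n-R) * real \<alpha> \<le> real \<alpha> * real m" unfolding m_def by (simp add: mult.commute mult_left_mono)
    ultimately show ?thesis by simp
  qed
  hence "K * \<beta> ^ (n-R) * real (m+1) ^ ((m+1) * \<alpha>) * (exp (real \<alpha>) ^ (n-R) / exp (real m) ^ \<alpha>)
         \<le> K * \<beta> ^ (n-R) * real (m+1) ^ ((m+1) * \<alpha>) * 1"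
    using K b by (intro mult_left_mono) auto
  also have "real (m+1) ^ ((m+1) * \<alpha>) \<le> real n ^ ((n - r') * \<alpha>)"
    unfolding m1 by (intro power_mono) auto
  hence "K * \<beta> ^ (n-R) * real (m+1) ^ ((m+1) * \<alpha>) * 1 \<le> K * \<beta> ^ (n-R) * real n ^ ((n - r') * \<alpha>)"
    using K b by (simp add: mult_left_mono)
  also have "real n ^ ((n - r') * \<alpha>) \<le> real n ^ (\<alpha> * n) * real n powr \<gamma> * (1 / real n) ^ r"
  proof -
    have e1: "real n ^ (\<alpha> * n) = real n ^ ((n - r') * \<alpha>) * real n ^ (\<alpha> * r')"
      using n by (simp add: power_add[symmetric] algebra_simps)
    have "real n powr (real r - \<gamma>) \<le> real n powr real (\<alpha> * r')" using rp rn by (rule powr_mono)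
    also have "\<dots> = real n ^ (\<alpha> * r')" using rn by (intro powr_realpow) simp
    finally have "real n powr (real r - \<gamma>) \<le> real n ^ (\<alpha> * r')" .
    moreover have "real n powr (real r - \<gamma>) = real n ^ r / real n powr \<gamma>"
      using rn by (simp add: powr_diff powr_realpow)
    ultimately have "real n ^ r \<le> real n ^ (\<alpha> * r') * real n powr \<gamma>" using rn by (simp add: divide_le_eq)
    hence "real n ^ ((n - r') * \<alpha>) * real n ^ r \<le> real n ^ ((n - r') * \<alpha>) * (real n ^ (\<alpha> * r') * real n powr \<gamma>)"
      using rn by (intro mult_left_mono) auto
    hence "real n ^ ((n - r') * \<alpha>) * real n ^ r \<le> real n ^ (\<alpha> * n) * real n powr \<gamma>"
      unfolding e1 by (simp add: mult_ac)
    thus ?thesis using rn by (simp add: field_simps power_one_over)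
  qed
  hence "K * \<beta> ^ (n-R) * real n ^ ((n - r') * \<alpha>) \<le> K * \<beta> ^ (n-R) * (real n ^ (\<alpha> * n) * real n powr \<gamma> * (1 / real n) ^ r)"
    using K b by (intro mult_left_mono) auto
  also have "\<dots> = (K / \<beta> ^ R) * (scale \<alpha> \<beta> \<gamma> n * (1 / real n) ^ r)"
  proof -
    have "n = R + (n - R)" using n unfolding R_def by simp
    hence "\<beta> ^ n = \<beta> ^ R * \<beta> ^ (n - R)" by (metis power_add)
    thus ?thesis unfolding scale_def using b by (simp add: field_simps)
  qed
  finally show ?thesis unfolding R_def .
qed

lemma has_fps_expansion_ln1: "(\<lambda>z::complex. ln (1 + z)) has_fps_expansion fps_ln 1"
proof -
  have eq: "(\<lambda>n. fps_nth (fps_ln 1) n * z ^ n) = (\<lambda>n. - ((-z)^n) / of_nat n)" for z :: complex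
  proof
    fix n :: nat
    show "fps_nth (fps_ln 1) n * z ^ n = - ((-z)^n) / of_nat n"
    proof (cases n)
      case 0 thus ?thesis by (simp add: fps_ln_nth)
    next
      case (Suc k)
      have e1: "(-z)^n = (-1)^n * z^n" by (rule power_minus)
      have e2: "fps_nth (fps_ln 1) n = (-1)^k / of_nat n" using Suc by (simp only: fps_ln_nth) simp
      have e3: "- ((-1::complex)^n) = (-1)^k" using Suc by simp
      show ?thesis unfolding e1 e2 minus_mult_left e3 by (simp only: times_divide_eq_left)
    qed
  qed
  have "eventually (\<lambda>z::complex. z \<in> ball 0 1) (nhds 0)" by (intro eventually_nhds_in_open) auto
  hence "eventually (\<lambda>z::complex. eval_fps (fps_ln 1) z = ln (1 + z)) (nhds 0)"
  proof (rule eventually_mono)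
    fix z :: complex assume "z \<in> ball 0 1"
    hence "norm z < 1" by simp
    from Ln_series'[OF this] have "(\<lambda>n. fps_nth (fps_ln 1) n * z ^ n) sums ln (1 + z)" by (simp only: eq)
    thus "eval_fps (fps_ln 1) z = ln (1 + z)" unfolding eval_fps_def by (rule sums_unique[symmetric])
  qed
  thus ?thesis unfolding has_fps_expansion_def by (simp add: fps_conv_radius_ln)
qed

lemma taylor_bound:
  fixes f :: "complex \<Rightarrow> complex"
  assumes "f has_fps_expansion F"
  shows "\<exists>C. eventually (\<lambda>z. norm (f z - (\<Sum>l<r. fps_nth F l * z^l)) \<le> C * norm z ^ r) (nhds 0)"
proof -
  define F' where "F' = fps_shift r F"
  have rad: "fps_conv_radius F > 0" using assms by (simp add: has_fps_expansion_def)
  have ev1: "eventually (\<lambda>z. eval_fps F z = f z) (nhds 0)" using assms by (simp add: has_fps_expansion_def)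
  have ev2: "eventually (\<lambda>z. z \<in> eball 0 (fps_conv_radius F)) (nhds 0)"
    using rad by (intro eventually_nhds_in_open) (auto simp: zero_ereal_def)
  have "continuous (at 0 within UNIV) (eval_fps F')"
    using rad by (intro continuous_eval_fps) (simp add: F'_def zero_ereal_def)
  hence "(eval_fps F' \<longlongrightarrow> eval_fps F' 0) (at 0)" by (simp add: continuous_def)
  hence "eventually (\<lambda>z. dist (eval_fps F' z) (eval_fps F' 0) < 1) (at 0)"
    by (rule tendstoD) simp
  hence "eventually (\<lambda>z. norm (eval_fps F' z) \<le> norm (eval_fps F' 0) + 1) (at 0)"
  proof (rule eventually_mono)
    fix z assume d: "dist (eval_fps F' z) (eval_fps F' 0) < 1"
    have "norm (eval_fps F' z) \<le> norm (eval_fps F' 0) + norm (eval_fps F' z - eval_fps F' 0)"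
      by (rule norm_triangle_sub)
    thus "norm (eval_fps F' z) \<le> norm (eval_fps F' 0) + 1" using d by (simp add: dist_norm)
  qed
  hence ev3: "eventually (\<lambda>z. norm (eval_fps F' z) \<le> norm (eval_fps F' 0) + 1) (nhds 0)"
    unfolding eventually_nhds_conv_at by simp
  define C where "C = norm (eval_fps F' 0) + 1"
  have "eventually (\<lambda>z. norm (f z - (\<Sum>l<r. fps_nth F l * z^l)) \<le> C * norm z ^ r) (nhds 0)"
    using ev1 ev2 ev3
  proof eventually_elim
    case (elim z)
    have nz: "ereal (norm z) < fps_conv_radius F" using elim(2) by simp
    have s1: "summable (\<lambda>n. fps_nth F n * z ^ n)" by (rule summable_fps[OF nz])
    have s2: "summable (\<lambda>n. fps_nth F' n * z ^ n)" by (rule summable_fps) (simp add: F'_def nz)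
    have "eval_fps F z = (\<Sum>n. fps_nth F (n + r) * z ^ (n + r)) + (\<Sum>i<r. fps_nth F i * z ^ i)"
      unfolding eval_fps_def by (rule suminf_split_initial_segment[OF s1])
    also have "(\<Sum>n. fps_nth F (n + r) * z ^ (n + r)) = (\<Sum>n. z ^ r * (fps_nth F' n * z ^ n))"
      by (simp add: F'_def power_add mult_ac)
    also have "\<dots> = z ^ r * eval_fps F' z" unfolding eval_fps_def by (rule suminf_mult[OF s2])
    finally have "f z - (\<Sum>l<r. fps_nth F l * z^l) = z ^ r * eval_fps F' z" using elim(1) by simp
    hence "norm (f z - (\<Sum>l<r. fps_nth F l * z^l)) = norm z ^ r * norm (eval_fps F' z)"
      by (simp add: norm_mult norm_power)
    also have "\<dots> \<le> norm z ^ r * C" unfolding C_def using elim(3) by (intro mult_left_mono) auto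
    finally show ?case by (simp add: mult.commute)
  qed
  thus ?thesis by blast
qed

lemma has_fps_expansion_shift1:
  fixes f :: "complex \<Rightarrow> complex"
  assumes "f has_fps_expansion F" "fps_nth F 0 = 0"
  shows "(\<lambda>x. if x = 0 then fps_nth F 1 else f x / x) has_fps_expansion fps_shift 1 F"
proof (cases "F = 0")
  case True
  hence "eventually (\<lambda>z. f z = 0) (nhds 0)" using assms(1) by (simp add: has_fps_expansion_0_iff)
  hence "eventually (\<lambda>z. (if z = 0 then fps_nth F 1 else f z / z) = 0) (nhds 0)"
    by (rule eventually_mono) (auto simp: True)
  thus ?thesis using True by (simp add: has_fps_expansion_0_iff)
next
  case False
  have "1 \<le> subdegree F" using False assms(2) by (intro subdegree_geI) auto
  from has_fps_expansion_shift[OF assms(1) this refl] show ?thesis by (simp only: power_one_right)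
qed

definition Efun :: "nat \<Rightarrow> real \<Rightarrow> real \<Rightarrow> nat \<Rightarrow> complex \<Rightarrow> complex" where
  "Efun \<alpha> \<beta> \<gamma> j z = complex_of_real (exp (- real (\<alpha> * j)) * inverse \<beta> ^ j) * z ^ (\<alpha> * j)
     * (1 + (- of_nat j) * z) powr (complex_of_real (\<gamma> - real (\<alpha> * j)))
     * exp (of_nat \<alpha> * (if z = 0 then fps_nth ((fps_ln 1 oo (fps_const (- of_nat j) * fps_X)) + fps_const (of_nat j) * fps_X) 1
                       else (ln (1 + (- of_nat j) * z) + of_nat j * z) / z))"

definition EF :: "nat \<Rightarrow> real \<Rightarrow> real \<Rightarrow> nat \<Rightarrow> complex fps" where
  "EF \<alpha> \<beta> \<gamma> j =
     fps_const (of_real (exp (- real (\<alpha> * j)) * inverse \<beta> ^ j))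
     * fps_X ^ (\<alpha> * j)
     * (fps_binomial (of_real (\<gamma> - real (\<alpha> * j))) oo (fps_const (- of_nat j) * fps_X))
     * (fps_exp 1 oo (fps_const (of_nat \<alpha>) *
          fps_shift 1 ((fps_ln 1 oo (fps_const (- of_nat j) * fps_X)) + fps_const (of_nat j) * fps_X)))"

lemma At_j_EF: "At_j \<alpha> \<beta> \<gamma> At j = EF \<alpha> \<beta> \<gamma> j * (At oo (fps_X * inverse (1 - fps_const (of_nat j) * fps_X)))"
  unfolding At_j_def EF_def ..

lemma Efun_expansion: "Efun \<alpha> \<beta> \<gamma> j has_fps_expansion EF \<alpha> \<beta> \<gamma> j"
proof -
  define GF :: "complex fps" where "GF = (fps_ln 1 oo (fps_const (- of_nat j) * fps_X)) + fps_const (of_nat j) * fps_X"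
  have lin: "(\<lambda>z::complex. (- of_nat j) * z) has_fps_expansion fps_const (- of_nat j) * fps_X"
    by (rule has_fps_expansion_cmult_left[OF has_fps_expansion_fps_X])
  have lin0: "fps_nth (fps_const (- of_nat j) * fps_X :: complex fps) 0 = 0" by simp
  have h1: "(\<lambda>z::complex. complex_of_real (exp (- real (\<alpha> * j)) * inverse \<beta> ^ j) * z ^ (\<alpha> * j))
            has_fps_expansion fps_const (of_real (exp (- real (\<alpha> * j)) * inverse \<beta> ^ j)) * fps_X ^ (\<alpha> * j)"
    by (rule has_fps_expansion_cmult_left[OF has_fps_expansion_fps_X_power])
  have h2: "(\<lambda>z::complex. (1 + (- of_nat j) * z) powr (complex_of_real (\<gamma> - real (\<alpha> * j))))
            has_fps_expansion (fps_binomial (of_real (\<gamma> - real (\<alpha> * j))) oo (fps_const (- of_nat j) * fps_X))"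
    using has_fps_expansion_compose[OF has_fps_expansion_binomial_complex lin lin0] unfolding o_def .
  have h3: "(\<lambda>z::complex. ln (1 + (- of_nat j) * z)) has_fps_expansion (fps_ln 1 oo (fps_const (- of_nat j) * fps_X))"
    using has_fps_expansion_compose[OF has_fps_expansion_ln1 lin lin0] unfolding o_def .
  have h4: "(\<lambda>z::complex. ln (1 + (- of_nat j) * z) + of_nat j * z) has_fps_expansion GF"
    unfolding GF_def by (intro has_fps_expansion_add h3 has_fps_expansion_cmult_left has_fps_expansion_fps_X)
  have GF0: "fps_nth GF 0 = 0" unfolding GF_def by (simp add: fps_compose_nth)
  have GF1: "fps_nth GF 1 = 0" unfolding GF_def by (simp add: fps_compose_nth fps_ln_nth)
  have h5: "(\<lambda>z::complex. if z = 0 then fps_nth GF 1 else (ln (1 + (- of_nat j) * z) + of_nat j * z) / z)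
            has_fps_expansion fps_shift 1 GF"
    by (rule has_fps_expansion_shift1[OF h4 GF0])
  have h5': "(\<lambda>z::complex. of_nat \<alpha> * (if z = 0 then fps_nth GF 1 else (ln (1 + (- of_nat j) * z) + of_nat j * z) / z))
            has_fps_expansion fps_const (of_nat \<alpha>) * fps_shift 1 GF"
    by (rule has_fps_expansion_cmult_left[OF h5])
  have h50: "fps_nth (fps_const (of_nat \<alpha>) * fps_shift 1 GF) 0 = 0" using GF1 by simp
  have h6: "(\<lambda>z::complex. exp (of_nat \<alpha> * (if z = 0 then fps_nth GF 1 else (ln (1 + (- of_nat j) * z) + of_nat j * z) / z)))
            has_fps_expansion (fps_exp 1 oo (fps_const (of_nat \<alpha>) * fps_shift 1 GF))"
    using has_fps_expansion_compose[OF has_fps_expansion_exp1 h5' h50] unfolding o_def .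
  have "(\<lambda>z. ((complex_of_real (exp (- real (\<alpha> * j)) * inverse \<beta> ^ j) * z ^ (\<alpha> * j))
            * (1 + (- of_nat j) * z) powr (complex_of_real (\<gamma> - real (\<alpha> * j))))
            * exp (of_nat \<alpha> * (if z = 0 then fps_nth GF 1 else (ln (1 + (- of_nat j) * z) + of_nat j * z) / z)))
        has_fps_expansion EF \<alpha> \<beta> \<gamma> j"
    unfolding EF_def GF_def[symmetric]
    by (intro has_fps_expansion_mult h1 h2 h6)
  thus ?thesis unfolding Efun_def GF_def[symmetric] by (simp add: mult.assoc)
qed

lemma scale_ratio_identity:
  assumes b: "\<beta> > 0" and n: "j < n"
  defines "x \<equiv> 1 - real j / real n"
  shows "exp (- real (\<alpha> * j)) * inverse \<beta> ^ j * (1 / real n) ^ (\<alpha> * j) * x powr (\<gamma> - real (\<alpha> * j))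
          * exp (real \<alpha> * ((ln x + real j / real n) * real n))
         = scale \<alpha> \<beta> \<gamma> (n - j) / scale \<alpha> \<beta> \<gamma> n"
proof -
  define N where "N = real n"
  have N: "N > 0" using n unfolding N_def by simp
  have x: "x > 0" using n unfolding x_def by (simp add: field_simps)
  have xN: "real (n - j) = x * N" using n N unfolding x_def N_def by (simp add: field_simps of_nat_diff)
  have ex: "exp (real \<alpha> * ((ln x + real j / N) * N)) = x ^ (\<alpha> * n) * exp (real (\<alpha> * j))"
  proof -
    have "real \<alpha> * ((ln x + real j / N) * N) = real (\<alpha> * n) * ln x + real (\<alpha> * j)"
      using N unfolding N_def by (simp add: field_simps)
    hence "exp (real \<alpha> * ((ln x + real j / N) * N)) = exp (real (\<alpha> * n) * ln x) * exp (real (\<alpha> * j))"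
      by (simp add: exp_add)
    also have "exp (real (\<alpha> * n) * ln x) = exp (ln x) ^ (\<alpha> * n)" by (rule exp_of_nat_mult)
    also have "\<dots> = x ^ (\<alpha> * n)" using x by simp
    finally show ?thesis .
  qed
  have xp: "x powr (\<gamma> - real (\<alpha> * j)) = x powr \<gamma> / x ^ (\<alpha> * j)"
  proof -
    have "x powr real (\<alpha> * j) = x ^ (\<alpha> * j)" using x by (rule powr_realpow)
    thus ?thesis by (simp only: powr_diff)
  qed
  have jn: "j + (n - j) = n" using n by simp
  have an: "\<alpha> * n = \<alpha> * j + \<alpha> * (n - j)" by (metis jn add_mult_distrib2)
  have xx: "x ^ (\<alpha> * n) = x ^ (\<alpha> * j) * x ^ (\<alpha> * (n - j))"
    by (subst an) (rule power_add)
  have NN: "N ^ (\<alpha> * n) = N ^ (\<alpha> * j) * N ^ (\<alpha> * (n - j))"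
    by (subst an) (rule power_add)
  have bb: "\<beta> ^ n = \<beta> ^ j * \<beta> ^ (n - j)"
    by (metis jn power_add)
  have sn: "scale \<alpha> \<beta> \<gamma> n = N ^ (\<alpha> * n) * \<beta> ^ n * N powr \<gamma>" unfolding scale_def N_def ..
  have snj: "scale \<alpha> \<beta> \<gamma> (n - j) = (x * N) ^ (\<alpha> * (n - j)) * \<beta> ^ (n - j) * (x * N) powr \<gamma>"
    unfolding scale_def xN ..
  have spos: "scale \<alpha> \<beta> \<gamma> n > 0" unfolding sn using N b by simp
  have "exp (- real (\<alpha> * j)) * inverse \<beta> ^ j * (1 / N) ^ (\<alpha> * j) * x powr (\<gamma> - real (\<alpha> * j))
          * exp (real \<alpha> * ((ln x + real j / N) * N)) * scale \<alpha> \<beta> \<gamma> n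
        = (exp (- real (\<alpha> * j)) * exp (real (\<alpha> * j))) * (inverse \<beta> ^ j * \<beta> ^ j) * ((1 / N) ^ (\<alpha> * j) * N ^ (\<alpha> * j))
          * (x ^ (\<alpha> * j) / x ^ (\<alpha> * j)) * (x ^ (\<alpha> * (n - j)) * N ^ (\<alpha> * (n - j))) * \<beta> ^ (n - j) * (x powr \<gamma> * N powr \<gamma>)"
    unfolding ex xp xx sn NN bb by (simp add: mult_ac)
  also have "\<dots> = scale \<alpha> \<beta> \<gamma> (n - j)"
    unfolding snj using x N b by (simp add: exp_minus power_mult_distrib powr_mult field_simps)
  finally show ?thesis using spos unfolding N_def by (simp add: field_simps)
qed

lemma Efun_at:
  assumes b: "\<beta> > 0" and n: "j < n"
  shows "Efun \<alpha> \<beta> \<gamma> j (complex_of_real (1 / real n)) = complex_of_real (scale \<alpha> \<beta> \<gamma> (n - j) / scale \<alpha> \<beta> \<gamma> n)"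
proof -
  define N where "N = real n"
  have N: "N > 0" using n unfolding N_def by simp
  define x where "x = 1 - real j / N"
  have x: "x > 0" using n unfolding x_def N_def by (simp add: field_simps)
  have z: "complex_of_real (1 / N) \<noteq> 0" using N by simp
  have e1: "1 + (- of_nat j) * complex_of_real (1 / N) = complex_of_real x" unfolding x_def by simp
  have e2: "complex_of_real x powr complex_of_real (\<gamma> - real (\<alpha> * j)) = complex_of_real (x powr (\<gamma> - real (\<alpha> * j)))"
    using x by (intro powr_of_real) simp
  have e3: "ln (complex_of_real x) = complex_of_real (ln x)" using x by (rule Ln_of_real)
  have e4: "(complex_of_real (ln x) + of_nat j * complex_of_real (1 / N)) / complex_of_real (1 / N)
            = complex_of_real ((ln x + real j / N) * N)"
  proof -
    have "complex_of_real (ln x) + of_nat j * complex_of_real (1 / N) = complex_of_real (ln x + real j / N)" by simp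
    hence "(complex_of_real (ln x) + of_nat j * complex_of_real (1 / N)) / complex_of_real (1 / N)
            = complex_of_real ((ln x + real j / N) / (1 / N))" by (simp only: of_real_divide)
    thus ?thesis using N by simp
  qed
  have "Efun \<alpha> \<beta> \<gamma> j (complex_of_real (1 / N)) =
        complex_of_real (exp (- real (\<alpha> * j)) * inverse \<beta> ^ j) * complex_of_real ((1 / N) ^ (\<alpha> * j))
        * complex_of_real (x powr (\<gamma> - real (\<alpha> * j)))
        * exp (of_nat \<alpha> * complex_of_real ((ln x + real j / N) * N))"
    unfolding Efun_def using z by (simp only: e1 e2 e3 e4 if_False of_real_power)
  also have "exp (of_nat \<alpha> * complex_of_real ((ln x + real j / N) * N)) = complex_of_real (exp (real \<alpha> * ((ln x + real j / N) * N)))"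
    by (simp only: exp_of_real[symmetric] of_real_mult of_real_of_nat_eq)
  finally have "Efun \<alpha> \<beta> \<gamma> j (complex_of_real (1 / N)) = complex_of_real (exp (- real (\<alpha> * j)) * inverse \<beta> ^ j * (1 / N) ^ (\<alpha> * j) * x powr (\<gamma> - real (\<alpha> * j))
          * exp (real \<alpha> * ((ln x + real j / N) * N)))" by simp
  also have "\<dots> = complex_of_real (scale \<alpha> \<beta> \<gamma> (n - j) / scale \<alpha> \<beta> \<gamma> n)"
    using scale_ratio_identity[OF b n, of \<alpha> \<gamma>] unfolding x_def N_def by simp
  finally show ?thesis unfolding N_def .
qed

definition Yfun :: "nat \<Rightarrow> complex \<Rightarrow> complex" where
  "Yfun j z = z * inverse (1 - of_nat j * z)"

definition YF :: "nat \<Rightarrow> complex fps" where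
  "YF j = fps_X * inverse (1 - fps_const (of_nat j) * fps_X)"

lemma Yfun_expansion: "Yfun j has_fps_expansion YF j"
proof -
  have "(\<lambda>z::complex. 1 - of_nat j * z) has_fps_expansion 1 - fps_const (of_nat j) * fps_X"
    by (intro has_fps_expansion_diff has_fps_expansion_1 has_fps_expansion_cmult_left has_fps_expansion_fps_X)
  hence "(\<lambda>z::complex. inverse (1 - of_nat j * z)) has_fps_expansion inverse (1 - fps_const (of_nat j) * fps_X)"
    by (rule has_fps_expansion_inverse) simp
  hence "(\<lambda>z::complex. z * inverse (1 - of_nat j * z)) has_fps_expansion YF j"
    unfolding YF_def by (intro has_fps_expansion_mult has_fps_expansion_fps_X)
  thus ?thesis unfolding Yfun_def[abs_def] .
qed

lemma YF0: "fps_nth (YF j) 0 = 0" unfolding YF_def by simp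

lemma Yfun_at:
  assumes "j < n"
  shows "Yfun j (1 / of_nat n) = 1 / of_nat (n - j)"
proof -
  have n: "(of_nat n :: complex) \<noteq> 0" using assms by simp
  have nj: "(of_nat (n - j) :: complex) = of_nat n - of_nat j" using assms by (simp add: of_nat_diff)
  have nj0: "(of_nat n - of_nat j :: complex) \<noteq> 0" using assms nj by (metis less_imp_le_nat of_nat_0_eq_iff zero_less_diff less_numeral_extra(3) of_nat_eq_iff)
  show ?thesis unfolding Yfun_def nj using n nj0 by (simp add: field_simps)
qed

lemma coeff_trunc:
  fixes E G :: "complex fps"
  assumes G0: "fps_nth G 0 = 0" and l: "l < r"
  shows "fps_nth (E * (\<Sum>i<r. fps_const (fps_nth At i) * G ^ i)) l = fps_nth (E * (At oo G)) l"
proof -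
  have "fps_nth (\<Sum>i<r. fps_const (fps_nth At i) * G ^ i) u = fps_nth (At oo G) u" if u: "u \<le> l" for u
  proof -
    have "fps_nth (\<Sum>i<r. fps_const (fps_nth At i) * G ^ i) u = (\<Sum>i<r. fps_nth At i * fps_nth (G ^ i) u)"
      by (simp add: fps_sum_nth)
    also have "\<dots> = (\<Sum>i=0..u. fps_nth At i * fps_nth (G ^ i) u)"
    proof (rule sum.mono_neutral_right)
      show "{0..u} \<subseteq> {..<r}" using u l by auto
      show "\<forall>i\<in>{..<r} - {0..u}. fps_nth At i * fps_nth (G ^ i) u = 0"
        using startsby_zero_power_prefix[OF G0] by auto
    qed auto
    also have "\<dots> = fps_nth (At oo G) u" by (simp add: fps_compose_nth)
    finally show ?thesis .
  qed
  thus ?thesis by (simp add: fps_mult_nth)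
qed

lemma scale_pos: "\<beta> > 0 \<Longrightarrow> n \<ge> 1 \<Longrightarrow> scale \<alpha> \<beta> \<gamma> n > 0"
  unfolding scale_def by simp

lemma scale_nonneg: "\<beta> > 0 \<Longrightarrow> scale \<alpha> \<beta> \<gamma> n \<ge> 0"
  unfolding scale_def by simp

lemma perj:
  fixes A At :: "complex fps"
  assumes b: "\<beta> > 0" and hyp: "asymp_fps (fps_nth A) (scale \<alpha> \<beta> \<gamma>) At"
  shows "\<exists>C. eventually (\<lambda>n. norm (fps_nth A (n - j) - of_real (scale \<alpha> \<beta> \<gamma> n) *
            (\<Sum>l<r. fps_nth (At_j \<alpha> \<beta> \<gamma> At j) l * (1 / of_nat n)^l))
            \<le> C * (scale \<alpha> \<beta> \<gamma> n * (1 / real n)^r)) at_top"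
proof -
  define s where "s = scale \<alpha> \<beta> \<gamma>"
  have spos: "\<And>n. n \<ge> 1 \<Longrightarrow> s n > 0" unfolding s_def using b by (rule scale_pos)
  have snn: "\<And>n. s n \<ge> 0" unfolding s_def using b by (rule scale_nonneg)
  have "(\<lambda>n. norm (fps_nth A n - of_real (s n) * (\<Sum>l<r. fps_nth At l * (1 / of_nat n) ^ l)))
          \<in> O(\<lambda>n. s n * (1 / real n) ^ r)"
    using hyp unfolding asymp_fps_def s_def by blast
  then obtain C0 where C0: "C0 > 0" and ev0: "eventually (\<lambda>n. norm (norm (fps_nth A n - of_real (s n) * (\<Sum>l<r. fps_nth At l * (1 / of_nat n) ^ l))) \<le> C0 * norm (s n * (1 / real n) ^ r)) at_top"
    by (rule landau_o.bigE)
  from ev0 obtain N0 where N0: "\<And>m. m \<ge> N0 \<Longrightarrow> norm (fps_nth A m - of_real (s m) * (\<Sum>l<r. fps_nth At l * (1 / of_nat m) ^ l)) \<le> C0 * (s m * (1 / real m) ^ r)"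
    unfolding eventually_at_top_linorder using snn by (auto simp: abs_mult)
  define \<Phi> where "\<Phi> = (\<lambda>z. Efun \<alpha> \<beta> \<gamma> j z * (\<Sum>l<r. fps_nth At l * Yfun j z ^ l))"
  define \<Phi>F where "\<Phi>F = EF \<alpha> \<beta> \<gamma> j * (\<Sum>l<r. fps_const (fps_nth At l) * YF j ^ l)"
  have \<Phi>exp: "\<Phi> has_fps_expansion \<Phi>F" unfolding \<Phi>_def \<Phi>F_def
    by (intro has_fps_expansion_mult Efun_expansion has_fps_expansion_sum has_fps_expansion_cmult_left
              has_fps_expansion_power Yfun_expansion)
  obtain CT where evT: "eventually (\<lambda>z. norm (\<Phi> z - (\<Sum>l<r. fps_nth \<Phi>F l * z^l)) \<le> CT * norm z ^ r) (nhds 0)"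
    using taylor_bound[OF \<Phi>exp] by blast
  obtain CE where evE0: "eventually (\<lambda>z. norm (Efun \<alpha> \<beta> \<gamma> j z - (\<Sum>l<0. fps_nth (EF \<alpha> \<beta> \<gamma> j) l * z^l)) \<le> CE * norm z ^ 0) (nhds 0)"
    using taylor_bound[OF Efun_expansion] by blast
  have evE: "eventually (\<lambda>z. norm (Efun \<alpha> \<beta> \<gamma> j z) \<le> CE) (nhds 0)" using evE0 by simp
  have lim: "filterlim (\<lambda>n. 1 / of_nat n :: complex) (nhds 0) at_top" by (rule lim_1_over_n)
  have evT': "eventually (\<lambda>n. norm (\<Phi> (1 / of_nat n) - (\<Sum>l<r. fps_nth \<Phi>F l * (1 / of_nat n)^l)) \<le> CT * norm (1 / of_nat n :: complex) ^ r) at_top"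
    using lim evT unfolding filterlim_iff by blast
  have evE': "eventually (\<lambda>n. norm (Efun \<alpha> \<beta> \<gamma> j (1 / of_nat n)) \<le> CE) at_top"
    using lim evE unfolding filterlim_iff by blast
  have coef: "\<And>l. l < r \<Longrightarrow> fps_nth \<Phi>F l = fps_nth (At_j \<alpha> \<beta> \<gamma> At j) l"
    unfolding \<Phi>F_def At_j_EF YF_def by (rule coeff_trunc) simp
  have "eventually (\<lambda>n. norm (fps_nth A (n - j) - of_real (s n) * (\<Sum>l<r. fps_nth (At_j \<alpha> \<beta> \<gamma> At j) l * (1 / of_nat n)^l))
            \<le> (C0 * CE * 2 ^ r + CT) * (s n * (1 / real n)^r)) at_top"
    using evT' evE' eventually_ge_at_top[of "N0 + 2 * j + 1"]
  proof eventually_elim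
    case (elim n)
    define z :: complex where "z = 1 / of_nat n"
    have n1: "n \<ge> 1" "j < n" "2 * j \<le> n" "N0 \<le> n - j" using elim(3) by auto
    have zr: "z = complex_of_real (1 / real n)" unfolding z_def by simp
    have nz: "norm z = 1 / real n" unfolding z_def by (simp add: norm_divide)
    have Ez: "Efun \<alpha> \<beta> \<gamma> j z = complex_of_real (s (n - j) / s n)"
      unfolding zr s_def by (rule Efun_at[OF b n1(2)])
    have Yz: "Yfun j z = 1 / of_nat (n - j)" unfolding z_def by (rule Yfun_at[OF n1(2)])
    have sn: "s n > 0" using spos n1 by simp
    have snj: "s (n - j) \<le> CE * s n"
    proof -
      have "norm (Efun \<alpha> \<beta> \<gamma> j z) = \<bar>s (n - j) / s n\<bar>" unfolding Ez by (rule norm_of_real)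
      also have "\<dots> = s (n - j) / s n" using snn[of "n-j"] sn by simp
      finally have "norm (Efun \<alpha> \<beta> \<gamma> j z) = s (n - j) / s n" .
      hence "s (n - j) / s n \<le> CE" using elim(2) unfolding z_def by simp
      thus ?thesis using sn by (simp add: divide_le_eq)
    qed
    have CE0: "CE \<ge> 0" using elim(2) by (meson norm_ge_zero order_trans)
    define D1 where "D1 = fps_nth A (n - j) - of_real (s (n - j)) * (\<Sum>l<r. fps_nth At l * (1 / of_nat (n - j)) ^ l)"
    have D1b: "norm D1 \<le> C0 * (s (n - j) * (1 / real (n - j)) ^ r)" unfolding D1_def using N0[OF n1(4)] .
    have "of_real (s n) * \<Phi> z = of_real (s (n - j)) * (\<Sum>l<r. fps_nth At l * (1 / of_nat (n - j)) ^ l)"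
      unfolding \<Phi>_def Ez Yz using sn by (simp add: of_real_divide)
    hence split: "fps_nth A (n - j) - of_real (s n) * (\<Sum>l<r. fps_nth (At_j \<alpha> \<beta> \<gamma> At j) l * z^l)
           = D1 + of_real (s n) * (\<Phi> z - (\<Sum>l<r. fps_nth \<Phi>F l * z^l))"
      unfolding D1_def using coef by (simp add: algebra_simps)
    have "norm (fps_nth A (n - j) - of_real (s n) * (\<Sum>l<r. fps_nth (At_j \<alpha> \<beta> \<gamma> At j) l * z^l))
          \<le> norm D1 + s n * norm (\<Phi> z - (\<Sum>l<r. fps_nth \<Phi>F l * z^l))"
      unfolding split using snn by (metis (no_types, lifting) abs_of_nonneg norm_mult norm_of_real norm_triangle_ineq)
    also have "\<dots> \<le> C0 * (s (n - j) * (1 / real (n - j)) ^ r) + s n * (CT * (1 / real n) ^ r)"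
      using D1b elim(1) sn unfolding z_def nz[unfolded z_def] by (intro add_mono mult_left_mono) auto
    also have "C0 * (s (n - j) * (1 / real (n - j)) ^ r) \<le> C0 * ((CE * s n) * (2 ^ r * (1 / real n) ^ r))"
    proof (intro mult_left_mono mult_mono snj)
      have "1 / real (n - j) \<le> 2 * (1 / real n)" using n1 by (simp add: field_simps of_nat_diff)
      hence "(1 / real (n - j)) ^ r \<le> (2 * (1 / real n)) ^ r" by (intro power_mono) auto
      thus "(1 / real (n - j)) ^ r \<le> 2 ^ r * (1 / real n) ^ r" by (simp only: power_mult_distrib)
    qed (use C0 CE0 sn snn in auto)
    finally show ?case unfolding z_def by (simp add: algebra_simps)
  qed
  thus ?thesis unfolding s_def by blast
qed

lemma At_j_vanish:
  assumes "l < \<alpha> * j"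
  shows "fps_nth (At_j \<alpha> \<beta> \<gamma> At j) l = 0"
proof -
  have "At_j \<alpha> \<beta> \<gamma> At j = fps_X ^ (\<alpha> * j) *
     (fps_const (of_real (exp (- real (\<alpha> * j)) * inverse \<beta> ^ j))
     * (fps_binomial (of_real (\<gamma> - real (\<alpha> * j))) oo (fps_const (- of_nat j) * fps_X))
     * (fps_exp 1 oo (fps_const (of_nat \<alpha>) *
          fps_shift 1 ((fps_ln 1 oo (fps_const (- of_nat j) * fps_X)) + fps_const (of_nat j) * fps_X)))
     * (At oo (fps_X * inverse (1 - fps_const (of_nat j) * fps_X))))"
    unfolding At_j_def by (simp only: mult_ac)
  thus ?thesis using assms by (simp only: fps_X_power_mult_nth) simp
qed

lemma At_H_sum:
  assumes "r \<le> R" and a: "\<alpha> \<ge> 1"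
  shows "(\<Sum>l<r. fps_nth (At_H \<alpha> \<beta> \<gamma> At HF A) l * z ^ l)
       = (\<Sum>j<R. fps_nth (fps_deriv HF oo A) j * (\<Sum>l<r. fps_nth (At_j \<alpha> \<beta> \<gamma> At j) l * z ^ l))"
proof -
  have "fps_nth (At_H \<alpha> \<beta> \<gamma> At HF A) l = (\<Sum>j<R. fps_nth (At_j \<alpha> \<beta> \<gamma> At j) l * fps_nth (fps_deriv HF oo A) j)"
    if l: "l < r" for l
  proof -
    have "fps_nth (At_H \<alpha> \<beta> \<gamma> At HF A) l = (\<Sum>j\<le>l. fps_nth (At_j \<alpha> \<beta> \<gamma> At j) l * fps_nth (fps_deriv HF oo A) j)"
      unfolding At_H_def by simp
    also have "\<dots> = (\<Sum>j<R. fps_nth (At_j \<alpha> \<beta> \<gamma> At j) l * fps_nth (fps_deriv HF oo A) j)"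
    proof (rule sum.mono_neutral_left)
      show "{..l} \<subseteq> {..<R}" using l assms by auto
      show "\<forall>j\<in>{..<R} - {..l}. fps_nth (At_j \<alpha> \<beta> \<gamma> At j) l * fps_nth (fps_deriv HF oo A) j = 0"
      proof
        fix j assume "j \<in> {..<R} - {..l}"
        hence "l < j" by auto
        also have "j \<le> \<alpha> * j" using a by simp
        finally show "fps_nth (At_j \<alpha> \<beta> \<gamma> At j) l * fps_nth (fps_deriv HF oo A) j = 0"
          by (simp add: At_j_vanish)
      qed
    qed auto
    finally show ?thesis .
  qed
  hence "(\<Sum>l<r. fps_nth (At_H \<alpha> \<beta> \<gamma> At HF A) l * z ^ l)
        = (\<Sum>l<r. (\<Sum>j<R. fps_nth (At_j \<alpha> \<beta> \<gamma> At j) l * fps_nth (fps_deriv HF oo A) j) * z ^ l)"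
    by (intro sum.cong refl) simp
  also have "\<dots> = (\<Sum>l<r. \<Sum>j<R. fps_nth (At_j \<alpha> \<beta> \<gamma> At j) l * fps_nth (fps_deriv HF oo A) j * z ^ l)"
    by (simp only: sum_distrib_right)
  also have "\<dots> = (\<Sum>l<r. \<Sum>j<R. fps_nth (fps_deriv HF oo A) j * (fps_nth (At_j \<alpha> \<beta> \<gamma> At j) l * z ^ l))"
    by (intro sum.cong refl) (simp only: mult_ac)
  also have "\<dots> = (\<Sum>j<R. \<Sum>l<r. fps_nth (fps_deriv HF oo A) j * (fps_nth (At_j \<alpha> \<beta> \<gamma> At j) l * z ^ l))"
    by (rule sum.swap)
  also have "\<dots> = (\<Sum>j<R. fps_nth (fps_deriv HF oo A) j * (\<Sum>l<r. fps_nth (At_j \<alpha> \<beta> \<gamma> At j) l * z ^ l))"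
    by (simp add: sum_distrib_left)
  finally show ?thesis .
qed

theorem proposition12:
  fixes H :: "complex \<Rightarrow> complex" and A At :: "complex fps"
    and \<alpha> :: nat and \<beta> \<gamma> :: real
  assumes "H analytic_on {0}"
    and "fps_nth A 0 = 0"
    and "\<alpha> > 0" and "\<beta> > 0" and "At \<noteq> 0"
    and "asymp_fps (fps_nth A) (scale \<alpha> \<beta> \<gamma>) At"
  shows "asymp_fps (fps_nth (fps_expansion H 0 oo A)) (scale \<alpha> \<beta> \<gamma>)
           (At_H \<alpha> \<beta> \<gamma> At (fps_expansion H 0) A)"
proof -
  note H = assms(1) and A0 = assms(2) and a = assms(3) and b = assms(4) and hyp = assms(6)
  define Hf where "Hf = fps_expansion H 0"
  define s where "s = scale \<alpha> \<beta> \<gamma>"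
  have a1: "\<alpha> \<ge> 1" using a by simp
  have spos: "\<And>n. n \<ge> 1 \<Longrightarrow> s n > 0" unfolding s_def using b by (rule scale_pos)
  have snn: "\<And>n. s n \<ge> 0" unfolding s_def using b by (rule scale_nonneg)
  have rad: "fps_conv_radius Hf > 0"
    using analytic_at_imp_has_fps_expansion_0[OF H] unfolding Hf_def has_fps_expansion_def by simp
  obtain M w where M: "M > 0" "w \<ge> 1" "\<And>m. norm (fps_nth Hf m) \<le> M * w ^ m"
    using fps_coeff_geom_bound[OF rad] by blast
  have "(\<lambda>n. norm (fps_nth A n - of_real (s n) * (\<Sum>l<0. fps_nth At l * (1 / of_nat n) ^ l)))
          \<in> O(\<lambda>n. s n * (1 / real n) ^ 0)"
    using hyp unfolding asymp_fps_def s_def by blast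
  hence "(\<lambda>n. norm (fps_nth A n)) \<in> O(\<lambda>n. s n)" by simp
  then obtain C0 where C0: "C0 > 0" and ev0: "eventually (\<lambda>n. norm (norm (fps_nth A n)) \<le> C0 * norm (s n)) at_top"
    by (rule landau_o.bigE)
  from ev0 obtain N0 where N0: "\<And>n. n \<ge> N0 \<Longrightarrow> norm (fps_nth A n) \<le> C0 * s n"
    unfolding eventually_at_top_linorder using snn by auto
  define K where "K = C0 + (\<Sum>n<N0. norm (fps_nth A n) / s n) + 1"
  have Ssum: "(\<Sum>n<N0. norm (fps_nth A n) / s n) \<ge> 0" using snn by (intro sum_nonneg) auto
  have K: "K > 0" unfolding K_def using C0 Ssum by simp
  have Ka: "norm (fps_nth A n) \<le> K * s n" if n: "n \<ge> 1" for n
  proof (cases "n \<ge> N0")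
    case True
    hence "norm (fps_nth A n) \<le> C0 * s n" by (rule N0)
    also have "\<dots> \<le> K * s n" unfolding K_def using Ssum snn[of n] by (intro mult_right_mono) auto
    finally show ?thesis .
  next
    case False
    have "norm (fps_nth A n) / s n \<le> (\<Sum>n<N0. norm (fps_nth A n) / s n)"
      using False snn by (intro member_le_sum) auto
    also have "\<dots> \<le> K" unfolding K_def using C0 by simp
    finally show ?thesis using spos[OF n] by (simp add: divide_le_eq)
  qed
  define p where "p = nat \<lceil>\<gamma>\<rceil>"
  have gp: "\<gamma> \<le> real p" unfolding p_def by linarith
  define lam where "lam = exp (real \<alpha>) * \<beta>"
  have lam: "lam > 0" unfolding lam_def using b by simp
  have Ab: "norm (fps_nth A i) \<le> sg K lam \<alpha> p i" for i
  proof (cases "i \<ge> 1")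
    case True
    have "norm (fps_nth A i) \<le> K * s i" by (rule Ka[OF True])
    also have "\<dots> \<le> K * sg 1 lam \<alpha> p i" unfolding s_def lam_def
      using K scale_le_sg[OF a1 b True gp] by (intro mult_left_mono) auto
    also have "\<dots> = sg K lam \<alpha> p i" unfolding sg_def by simp
    finally show ?thesis .
  next
    case False
    hence "i = 0" by simp
    thus ?thesis using A0 sg_pos[OF K lam, of \<alpha> p 0] by simp
  qed
  show ?thesis unfolding asymp_fps_def Hf_def[symmetric] s_def[symmetric]
  proof (intro allI)
    fix r :: nat
    define r' where "r' = r + nat \<lceil>\<bar>\<gamma>\<bar>\<rceil>"
    define R where "R = p + 1 + r'"
    have rp: "real r - \<gamma> \<le> real (\<alpha> * r')"
    proof -
      have "real r - \<gamma> \<le> real r'" unfolding r'_def by linarith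
      also have "r' \<le> \<alpha> * r'" using a1 mult_le_mono1[of 1 \<alpha> r'] by simp
      hence "real r' \<le> real (\<alpha> * r')" by (rule of_nat_mono)
      finally show ?thesis .
    qed
    have R1: "R \<ge> 1" "r \<le> R" unfolding R_def r'_def by auto
    define d where "d = (\<lambda>j. fps_nth (fps_deriv Hf oo A) j)"
    obtain CB where CB: "\<forall>n\<ge>2*R. norm (fps_nth (Hf oo A) n - (\<Sum>j<R. d j * fps_nth A (n-j))) \<le> CB * sg K lam \<alpha> p (n-R)"
      using partB[OF M(3) M(1) M(2) A0 Ab K lam a1 R1(1)] unfolding d_def by blast
    have CB0: "CB \<ge> 0"
    proof -
      have "0 \<le> CB * sg K lam \<alpha> p (2*R-R)" using CB[rule_format, of "2*R"] by (meson norm_ge_zero order_trans order_refl)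
      thus ?thesis using sg_pos[OF K lam, of \<alpha> p "2*R-R"] by (simp add: zero_le_mult_iff)
    qed
    have "\<forall>j\<in>{..<R}. \<exists>C. eventually (\<lambda>n. norm (fps_nth A (n - j) - of_real (s n) *
            (\<Sum>l<r. fps_nth (At_j \<alpha> \<beta> \<gamma> At j) l * (1 / of_nat n)^l))
            \<le> C * (s n * (1 / real n)^r)) at_top"
      using perj[OF b hyp] unfolding s_def by blast
    then obtain Cf where Cf: "\<forall>j\<in>{..<R}. eventually (\<lambda>n. norm (fps_nth A (n - j) - of_real (s n) *
            (\<Sum>l<r. fps_nth (At_j \<alpha> \<beta> \<gamma> At j) l * (1 / of_nat n)^l))
            \<le> Cf j * (s n * (1 / real n)^r)) at_top"
      by (rule bchoice[THEN exE]) blast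
    have evJ: "eventually (\<lambda>n. \<forall>j\<in>{..<R}. norm (fps_nth A (n - j) - of_real (s n) *
            (\<Sum>l<r. fps_nth (At_j \<alpha> \<beta> \<gamma> At j) l * (1 / of_nat n)^l))
            \<le> Cf j * (s n * (1 / real n)^r)) at_top"
      using Cf by (simp add: eventually_ball_finite)
    define CC where "CC = CB * (K / \<beta> ^ R) + (\<Sum>j<R. norm (d j) * Cf j)"
    have "eventually (\<lambda>n. norm (fps_nth (Hf oo A) n - of_real (s n) * (\<Sum>l<r. fps_nth (At_H \<alpha> \<beta> \<gamma> At Hf A) l * (1 / of_nat n)^l))
             \<le> CC * (s n * (1 / real n)^r)) at_top"
      using evJ eventually_ge_at_top[of "2*R"]
    proof eventually_elim
      case (elim n)
      define z :: complex where "z = 1 / of_nat n"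
      define X where "X = s n * (1 / real n)^r"
      define E1 where "E1 = fps_nth (Hf oo A) n - (\<Sum>j<R. d j * fps_nth A (n-j))"
      define Dj where "Dj = (\<lambda>j. fps_nth A (n - j) - of_real (s n) * (\<Sum>l<r. fps_nth (At_j \<alpha> \<beta> \<gamma> At j) l * z^l))"
      have E1b: "norm E1 \<le> CB * (K / \<beta> ^ R) * X"
      proof -
        have "norm E1 \<le> CB * sg K lam \<alpha> p (n-R)" unfolding E1_def using CB elim(2) by auto
        also have "sg K lam \<alpha> p (n-R) \<le> (K / \<beta> ^ R) * X"
          unfolding lam_def R_def X_def s_def using sg_le_scale[OF a1 b K rp, of p n] elim(2) unfolding R_def by simp
        hence "CB * sg K lam \<alpha> p (n-R) \<le> CB * ((K / \<beta> ^ R) * X)" using CB0 by (rule mult_left_mono)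
        finally show ?thesis by (simp add: mult_ac)
      qed
      have Djb: "\<And>j. j < R \<Longrightarrow> norm (Dj j) \<le> Cf j * X" using elim(1) unfolding Dj_def X_def z_def by auto
      have id: "fps_nth (Hf oo A) n - of_real (s n) * (\<Sum>l<r. fps_nth (At_H \<alpha> \<beta> \<gamma> At Hf A) l * z^l)
                = E1 + (\<Sum>j<R. d j * Dj j)"
      proof -
        have "of_real (s n) * (\<Sum>l<r. fps_nth (At_H \<alpha> \<beta> \<gamma> At Hf A) l * z^l)
              = (\<Sum>j<R. d j * (of_real (s n) * (\<Sum>l<r. fps_nth (At_j \<alpha> \<beta> \<gamma> At j) l * z ^ l)))"
          unfolding At_H_sum[OF R1(2) a1] d_def by (simp add: sum_distrib_left mult_ac)
        thus ?thesis unfolding E1_def Dj_def by (simp add: right_diff_distrib sum_subtractf)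
      qed
      have "norm (fps_nth (Hf oo A) n - of_real (s n) * (\<Sum>l<r. fps_nth (At_H \<alpha> \<beta> \<gamma> At Hf A) l * z^l))
            \<le> norm E1 + (\<Sum>j<R. norm (d j) * norm (Dj j))"
        unfolding id by (rule order_trans[OF norm_triangle_ineq add_left_mono]) (rule order_trans[OF norm_sum], simp add: norm_mult)
      also have "\<dots> \<le> CB * (K / \<beta> ^ R) * X + (\<Sum>j<R. norm (d j) * (Cf j * X))"
        using E1b Djb by (intro add_mono sum_mono mult_left_mono) auto
      also have "\<dots> = CC * X"
      proof -
        have "(\<Sum>j<R. norm (d j) * (Cf j * X)) = (\<Sum>j<R. norm (d j) * Cf j) * X"
          by (simp only: sum_distrib_right mult.assoc)
        thus ?thesis unfolding CC_def by (simp only: distrib_right)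
      qed
      finally show ?case unfolding z_def X_def .
    qed
    thus "(\<lambda>n. norm (fps_nth (Hf oo A) n - of_real (s n) * (\<Sum>l<r. fps_nth (At_H \<alpha> \<beta> \<gamma> At Hf A) l * (1 / of_nat n) ^ l)))
          \<in> O(\<lambda>n. s n * (1 / real n) ^ r)"
      by (intro bigoI[where c = CC]) (auto elim!: eventually_mono simp: abs_mult snn)
  qed
qed

end
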